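(* Let $n\in\mathbb N$, let $A$ be a Young function satisfying (C1), (C2), (C3), let $B$ be the associated function, and let $\varphi$ be a gauge function. For $r>0$ define $J_r(0)=0$ and $J_r(s)=s\,B^{-1}(r\varphi(s)/s^n)$ for $s>0$. Then for each $r>0$ the function $J_r$ is increasing and bijective on $[0,\infty)$; for each fixed $s>0$ the map $r\mapsto J_r^{-1}(s)$ is non-increasing on $(0,\infty)$; and $$\varphi\big(J_r^{-1}(st)\big)\le\varphi(t)+\frac{t^n}{r}B(s)\qquad\text{for all } s,t>0,\ r>0.$$
   Context: A gauge function is a function $\varphi\colon[0,\infty)\to[0,\infty)$ that is increasing, continuous and vanishes only at $0$, and (standing assumption) such that $r\mapsto\varphi(r)/r^n$ is non-increasing on $(0,\infty)$. A Young function is a non-trivial convex $A\colon[0,\infty)\to[0,\infty]$ with $A(0)=0$; $\widetilde A(t)=\sup_{\tau\ge0}(\tau t-A(\tau))$. Conditions: (C1) if $n=1$, $\lim_{t\to\infty}t/A(t)=0$; if $n\ge2$, $\int^\infty (t/A(t))^{1/(n-1)}dt<\infty$. (C2) $0<A(t)<\infty$ for $t>0$. (C3) if $n=1$, $\lim_{t\to0^+}t/A(t)=\infty$; if $n\ge2$, $\int_0(t/A(t))^{1/(n-1)}dt=\infty$. $B=A$ if $n=1$; for $n\ge2$, $B$ is the Young conjugate of $t\mapsto t^{n'}\int_t^\infty\widetilde A(s)s^{-1-n'}ds$, $n'=n/(n-1)$. *)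

theory Defs
  imports "HOL-Analysis.Analysis"
begin

text \<open>Young function (finite-valued version; condition (C2) forces finiteness on [0,oo)).
  Only the values on [0,oo) are relevant.\<close>
definition young_function :: "(real \<Rightarrow> real) \<Rightarrow> bool" where
  "young_function A \<longleftrightarrow> convex_on {0..} A \<and> A 0 = 0 \<and> (\<forall>t\<ge>0. 0 \<le> A t) \<and> (\<exists>t>0. A t \<noteq> 0)"

definition young_conj :: "(real \<Rightarrow> ereal) \<Rightarrow> real \<Rightarrow> ereal" where
  "young_conj F t = (SUP \<tau>\<in>{0..}. ereal (\<tau> * t) - F \<tau>)"

definition cond_C1 :: "nat \<Rightarrow> (real \<Rightarrow> real) \<Rightarrow> bool" where
  "cond_C1 n A \<longleftrightarrow> (if n = 1 then ((\<lambda>t. t / A t) \<longlongrightarrow> 0) at_top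
     else (\<integral>\<^sup>+ t. indicator {1..} t * ennreal ((t / A t) powr (1 / (real n - 1))) \<partial>lborel) < \<infinity>)"

definition cond_C2 :: "(real \<Rightarrow> real) \<Rightarrow> bool" where
  "cond_C2 A \<longleftrightarrow> (\<forall>t>0. 0 < A t)"

definition cond_C3 :: "nat \<Rightarrow> (real \<Rightarrow> real) \<Rightarrow> bool" where
  "cond_C3 n A \<longleftrightarrow> (if n = 1 then filterlim (\<lambda>t. t / A t) at_top (at_right 0)
     else (\<integral>\<^sup>+ t. indicator {0<..1} t * ennreal ((t / A t) powr (1 / (real n - 1))) \<partial>lborel) = \<infinity>)"

definition nprime :: "nat \<Rightarrow> real" where
  "nprime n = real n / (real n - 1)"

definition E_fun :: "nat \<Rightarrow> (real \<Rightarrow> real) \<Rightarrow> real \<Rightarrow> ennreal" where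
  "E_fun n A t = ennreal (t powr nprime n) *
     (\<integral>\<^sup>+ s. indicator {t<..} s * e2ennreal (young_conj (\<lambda>\<tau>. ereal (A \<tau>)) s)
              * ennreal (s powr (- 1 - nprime n)) \<partial>lborel)"

definition B_fun :: "nat \<Rightarrow> (real \<Rightarrow> real) \<Rightarrow> real \<Rightarrow> ereal" where
  "B_fun n A t = (if n = 1 then ereal (A t)
                  else young_conj (\<lambda>\<tau>. enn2ereal (E_fun n A \<tau>)) t)"

definition B_inv :: "nat \<Rightarrow> (real \<Rightarrow> real) \<Rightarrow> real \<Rightarrow> real" where
  "B_inv n A u = Sup {t. 0 \<le> t \<and> B_fun n A t \<le> ereal u}"

definition gauge_function :: "nat \<Rightarrow> (real \<Rightarrow> real) \<Rightarrow> bool" where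
  "gauge_function n \<phi> \<longleftrightarrow> \<phi> 0 = 0 \<and> (\<forall>t>0. 0 < \<phi> t) \<and> mono_on {0..} \<phi> \<and>
     continuous_on {0..} \<phi> \<and> antimono_on {0<..} (\<lambda>r. \<phi> r / r ^ n)"

definition J_fun :: "nat \<Rightarrow> (real \<Rightarrow> real) \<Rightarrow> (real \<Rightarrow> real) \<Rightarrow> real \<Rightarrow> real \<Rightarrow> real" where
  "J_fun n A \<phi> r s = (if s = 0 then 0 else s * B_inv n A (r * \<phi> s / s ^ n))"

definition J_inv :: "nat \<Rightarrow> (real \<Rightarrow> real) \<Rightarrow> (real \<Rightarrow> real) \<Rightarrow> real \<Rightarrow> real \<Rightarrow> real" where
  "J_inv n A \<phi> r = the_inv_into {0..} (J_fun n A \<phi> r)"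

end

theory Submission
  imports Defs
begin


lemma powr_int_closed:
  fixes a p :: real
  assumes a: "a > 0" and p: "p > 0"
  shows "(\<integral>\<^sup>+u. indicator {a..} u * ennreal (u powr (-1-p)) \<partial>lborel) = ennreal (a powr (-p) / p)"
proof -
  have "((\<lambda>x. x powr (-1-p)) has_integral -(a powr ((-1-p)+1)) / ((-1-p)+1)) {a..}"
    using a p by (intro has_integral_powr_to_inf) auto
  then have I: "((\<lambda>x. x powr (-1-p)) has_integral a powr (-p) / p) {a..}" by simp
  have "(\<integral>\<^sup>+u. ennreal (indicator {a..} u * u powr (-1-p)) \<partial>lborel) = ennreal (a powr (-p) / p)"
    by (rule nn_integral_has_integral_lebesgue[OF _ I]) simp
  then show ?thesis by (simp add: indicator_mult_ennreal mult.commute)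
qed

lemma powr_int_open:
  fixes a p :: real
  assumes a: "a > 0" and p: "p > 0"
  shows "(\<integral>\<^sup>+u. indicator {a<..} u * ennreal (u powr (-1-p)) \<partial>lborel) = ennreal (a powr (-p) / p)"
proof -
  have "(\<integral>\<^sup>+u. indicator {a<..} u * ennreal (u powr (-1-p)) \<partial>lborel) =
        (\<integral>\<^sup>+u. indicator {a..} u * ennreal (u powr (-1-p)) \<partial>lborel)"
    by (intro nn_integral_cong_AE eventually_mono[OF AE_lborel_singleton[of a]]) (auto simp: indicator_def)
  then show ?thesis using powr_int_closed[OF assms] by simp
qed

lemma tonelli_layer:
  fixes g :: "real \<Rightarrow> real" and T :: "real set" and p :: real
  assumes T[measurable]: "T \<in> sets borel" and g[measurable]: "g \<in> borel_measurable borel"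
    and gpos: "\<And>t. t \<in> T \<Longrightarrow> g t > 0" and p: "p > 0"
  shows "(\<integral>\<^sup>+u. indicator {0<..} u * ennreal (u powr (-1-p)) * emeasure lborel {t\<in>T. g t \<le> u} \<partial>lborel)
       = (\<integral>\<^sup>+t. indicator T t * ennreal (g t powr (-p) / p) \<partial>lborel)"
proof -
  have S: "{t\<in>T. g t \<le> u} \<in> sets lborel" for u by measurable
  have "(\<integral>\<^sup>+u. indicator {0<..} u * ennreal (u powr (-1-p)) * emeasure lborel {t\<in>T. g t \<le> u} \<partial>lborel)
      = (\<integral>\<^sup>+u. (\<integral>\<^sup>+t. indicator {0<..} u * ennreal (u powr (-1-p)) * indicator {t\<in>T. g t \<le> u} t \<partial>lborel) \<partial>lborel)"
    by (intro nn_integral_cong) (simp add: nn_integral_cmult S)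
  also have "\<dots> = (\<integral>\<^sup>+t. (\<integral>\<^sup>+u. indicator {0<..} u * ennreal (u powr (-1-p)) * indicator {t\<in>T. g t \<le> u} t \<partial>lborel) \<partial>lborel)"
    by (rule lborel_pair.Fubini') measurable
  also have "\<dots> = (\<integral>\<^sup>+t. indicator T t * ennreal (g t powr (-p) / p) \<partial>lborel)"
  proof (intro nn_integral_cong)
    fix t :: real
    show "(\<integral>\<^sup>+u. indicator {0<..} u * ennreal (u powr (-1-p)) * indicator {t\<in>T. g t \<le> u} t \<partial>lborel)
        = indicator T t * ennreal (g t powr (-p) / p)"
    proof (cases "t \<in> T")
      case True
      have "(\<integral>\<^sup>+u. indicator {0<..} u * ennreal (u powr (-1-p)) * indicator {t\<in>T. g t \<le> u} t \<partial>lborel)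
          = (\<integral>\<^sup>+u. indicator {g t..} u * ennreal (u powr (-1-p)) \<partial>lborel)"
        using True gpos[OF True] by (intro nn_integral_cong) (auto simp: indicator_def)
      also have "\<dots> = ennreal (g t powr (-p) / p)" by (rule powr_int_closed[OF gpos[OF True] p])
      finally show ?thesis using True by simp
    qed simp
  qed
  finally show ?thesis .
qed

lemma meas_layer[measurable]:
  fixes g :: "real \<Rightarrow> real" and T :: "real set"
  assumes T[measurable]: "T \<in> sets borel" and g[measurable]: "g \<in> borel_measurable borel"
  shows "(\<lambda>u. emeasure lborel {t\<in>T. g t \<le> u}) \<in> borel_measurable borel"
proof -
  have Q': "{x \<in> space (lborel \<Otimes>\<^sub>M lborel). snd x \<in> T \<and> g (snd x) \<le> fst (x::real\<times>real)} \<in> sets (lborel \<Otimes>\<^sub>M lborel)"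
    by measurable
  have Q: "{(u::real,t::real). t \<in> T \<and> g t \<le> u} \<in> sets (lborel \<Otimes>\<^sub>M lborel)"
    using Q' by (simp add: case_prod_beta' space_pair_measure Collect_conj_eq)
  have "(\<lambda>u. emeasure lborel (Pair u -` {(u::real,t::real). t \<in> T \<and> g t \<le> u})) \<in> borel_measurable lborel"
    by (rule lborel.measurable_emeasure_Pair[OF Q])
  then show ?thesis by (simp add: vimage_def)
qed


lemma conv_ratio_mono:
  fixes f :: "real \<Rightarrow> real"
  assumes cf: "convex_on {0..} f" and f0: "f 0 = 0" and xy: "0 < x" "x \<le> y"
  shows "f x / x \<le> f y / y"
proof -
  define t where "t = x / y"
  have t: "0 \<le> t" "t \<le> 1" using xy by (auto simp: t_def)
  have "f ((1 - t) *\<^sub>R 0 + t *\<^sub>R y) \<le> (1 - t) * f 0 + t * f y"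
    by (rule convex_onD[OF cf t]) (use xy in auto)
  moreover have "(1 - t) *\<^sub>R 0 + t *\<^sub>R y = x" using xy by (simp add: t_def)
  ultimately have "f x \<le> x / y * f y" using f0 by (simp add: t_def)
  then show ?thesis using xy by (simp add: field_simps)
qed

lemma conv_ratio_strict:
  fixes f :: "real \<Rightarrow> real"
  assumes cf: "convex_on {0..} f" and f0: "f 0 = 0" and fpos: "\<And>t. t > 0 \<Longrightarrow> f t > 0"
    and lim: "((\<lambda>t. f t / t) \<longlongrightarrow> 0) (at_right 0)" and xy: "0 < x" "x < y"
  shows "f x / x < f y / y"
proof (rule ccontr)
  assume "\<not> ?thesis"
  then have le: "f y / y \<le> f x / x" by simp
  define k where "k = f x / x"
  have k: "k > 0" using fpos[OF xy(1)] xy by (simp add: k_def)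
  have fy: "f y = k * y" using le conv_ratio_mono[OF cf f0 xy(1) less_imp_le[OF xy(2)]] xy
    by (simp add: k_def field_simps)
  have fx: "f x = k * x" using xy by (simp add: k_def)
  have lower: "k \<le> f z / z" if z: "0 < z" "z < x" for z
  proof -
    define \<theta> where "\<theta> = (y - x) / (y - z)"
    have th: "0 \<le> \<theta>" "\<theta> \<le> 1" using z xy by (auto simp: \<theta>_def)
    have th0: "\<theta> > 0" using z xy by (auto simp: \<theta>_def)
    have yz: "y - z \<noteq> 0" using z xy by simp
    have "(1 - \<theta>) * y + \<theta> * z = y - \<theta> * (y - z)" by (simp add: algebra_simps)
    also have "\<theta> * (y - z) = y - x" using yz by (simp add: \<theta>_def)
    finally have eq: "(1 - \<theta>) *\<^sub>R y + \<theta> *\<^sub>R z = x" by simp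
    have "f ((1 - \<theta>) *\<^sub>R y + \<theta> *\<^sub>R z) \<le> (1 - \<theta>) * f y + \<theta> * f z"
      by (rule convex_onD[OF cf th]) (use z xy in auto)
    then have "k * x \<le> (1 - \<theta>) * (k * y) + \<theta> * f z" unfolding eq fx fy .
    moreover have "(1 - \<theta>) * y = x - \<theta> * z" using eq by simp
    ultimately have "k * x \<le> k * (x - \<theta> * z) + \<theta> * f z" by (metis mult.assoc mult.commute)
    then have "\<theta> * (k * z) \<le> \<theta> * f z" by (simp add: algebra_simps)
    then have "k * z \<le> f z" using th0 by simp
    then show ?thesis using z by (simp add: field_simps)
  qed
  have "k \<le> 0"
  proof (rule tendsto_lowerbound[OF lim])
    show "\<forall>\<^sub>F z in at_right 0. k \<le> f z / z"
      unfolding eventually_at_right_field using xy lower by blast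
  qed simp
  then show False using k by simp
qed


lemma case_n1:
  assumes "young_function A" "cond_C3 1 A" "cond_C2 A"
  shows "\<exists>b. (\<forall>t\<ge>0. B_fun 1 A t = ereal (b t)) \<and> b 0 = 0 \<and> continuous_on {0<..} b
     \<and> strict_mono_on {0<..} (\<lambda>t. b t / t ^ 1) \<and> ((\<lambda>t. b t / t ^ 1) \<longlongrightarrow> 0) (at_right 0)"
proof (intro exI conjI allI impI)
  have cf: "convex_on {0..} A" and A0: "A 0 = 0" using assms(1) by (auto simp: young_function_def)
  have Apos: "\<And>t. t > 0 \<Longrightarrow> A t > 0" using assms(3) by (auto simp: cond_C2_def)
  have "filterlim (\<lambda>t. t / A t) at_top (at_right 0)" using assms(2) by (simp add: cond_C3_def)
  then have "((\<lambda>t. inverse (t / A t)) \<longlongrightarrow> 0) (at_right 0)" by (rule tendsto_inverse_0_at_top)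
  then show lim: "((\<lambda>t. A t / t ^ 1) \<longlongrightarrow> 0) (at_right 0)" by simp
  show "\<And>t. t \<ge> 0 \<Longrightarrow> B_fun 1 A t = ereal (A t)" by (simp add: B_fun_def)
  show "A 0 = 0" by (rule A0)
  show "continuous_on {0<..} A"
    by (rule convex_on_continuous) (auto intro: convex_on_subset[OF cf])
  show "strict_mono_on {0<..} (\<lambda>t. A t / t ^ 1)"
    using conv_ratio_strict[OF cf A0 Apos] lim by (auto simp: strict_mono_on_def)
qed


definition pp :: "nat \<Rightarrow> real" where "pp n = 1 / (real n - 1)"
definition atil :: "(real \<Rightarrow> real) \<Rightarrow> real \<Rightarrow> real" where
  "atil A s = real_of_ereal (young_conj (\<lambda>\<tau>. ereal (A \<tau>)) s)"

lemma ennreal_unbounded_Ici: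
  fixes c :: real assumes c: "c > 0"
  shows "(\<integral>\<^sup>+(t::real). indicator {1..} t * ennreal c \<partial>lborel) = \<infinity>"
proof -
  have "(\<integral>\<^sup>+(t::real). indicator {1..} t * ennreal c \<partial>lborel) = (\<integral>\<^sup>+(t::real). ennreal c * indicator {1..} t \<partial>lborel)"
    by (simp add: mult.commute)
  also have "\<dots> = ennreal c * emeasure lborel {1::real..}"
    by (rule nn_integral_cmult_indicator) simp
  finally have "(\<integral>\<^sup>+(t::real). indicator {1..} t * ennreal c \<partial>lborel) = ennreal c * emeasure lborel {1::real..}" .
  moreover have "emeasure lborel {1::real..} = \<infinity>"
  proof (rule ccontr)
    assume "emeasure lborel {1::real..} \<noteq> \<infinity>"
    then obtain x where x: "emeasure lborel {1::real..} = ennreal x" "x \<ge> 0"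
      by (cases "emeasure lborel {1::real..}" rule: ennreal_cases) auto
    have "emeasure lborel {1::real..x+2} \<le> emeasure lborel {1::real..}"
      by (intro emeasure_mono) auto
    moreover have "emeasure lborel {1::real..x+2} = ennreal (x + 1)"
      using x by (subst emeasure_lborel_Icc) (auto simp: algebra_simps)
    ultimately have "ennreal (x + 1) \<le> ennreal x" using x(1) by simp
    then have "x + 1 \<le> x" using x(2) by (subst (asm) ennreal_le_iff) auto
    then show False by simp
  qed
  ultimately show ?thesis using c by (simp add: ennreal_mult_top)
qed

definition gh :: "(real \<Rightarrow> real) \<Rightarrow> real \<Rightarrow> real" where
  "gh A t = (if t \<le> 0 then 0 else A t / t)"

definition ff :: "nat \<Rightarrow> (real \<Rightarrow> real) \<Rightarrow> real \<Rightarrow> ennreal" where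
  "ff n A s = ennreal (atil A s * s powr (-2 - pp n))"

definition FF :: "nat \<Rightarrow> (real \<Rightarrow> real) \<Rightarrow> real \<Rightarrow> ennreal" where
  "FF n A \<tau> = (\<integral>\<^sup>+s. indicator {\<tau><..} s * ff n A s \<partial>lborel)"

context
  fixes n :: nat and A :: "real \<Rightarrow> real"
  assumes n2: "n \<ge> 2" and yf: "young_function A" and C1: "cond_C1 n A"
    and C2: "cond_C2 A" and C3: "cond_C3 n A"
begin

lemma n_ne1: "n \<noteq> 1" using n2 by simp

lemma C1': "(\<integral>\<^sup>+(t::real). indicator {1..} t * ennreal ((t / A t) powr (1 / (real n - 1))) \<partial>lborel) < \<infinity>"
  using C1 n_ne1 unfolding cond_C1_def by presburger

lemma C3': "(\<integral>\<^sup>+(t::real). indicator {0<..1} t * ennreal ((t / A t) powr (1 / (real n - 1))) \<partial>lborel) = \<infinity>"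
  using C3 n_ne1 unfolding cond_C3_def by presburger

lemma p_pos: "pp n > 0" and p_le1: "pp n \<le> 1"
  using n2 by (auto simp: pp_def)

lemma p_mult: "pp n * (real n - 1) = 1"
  using n2 by (simp add: pp_def)

lemma A_conv: "convex_on {0..} A" and A0: "A 0 = 0" and A_nonneg: "t \<ge> 0 \<Longrightarrow> A t \<ge> 0"
  using yf by (auto simp: young_function_def)

lemma A_pos: "t > 0 \<Longrightarrow> A t > 0"
  using C2 by (auto simp: cond_C2_def)

lemma g_mono: "0 < x \<Longrightarrow> x \<le> y \<Longrightarrow> A x / x \<le> A y / y"
  by (rule conv_ratio_mono[OF A_conv A0])

lemma g_pos: "t > 0 \<Longrightarrow> A t / t > 0"
  using A_pos by simp

lemma g_small: assumes c: "c > 0" shows "\<exists>t>0. A t / t < c"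
proof (rule ccontr)
  assume "\<not> ?thesis"
  then have ge: "\<And>t. t > 0 \<Longrightarrow> A t / t \<ge> c" by (meson not_le)
  have "(\<integral>\<^sup>+(t::real). indicator {0<..1} t * ennreal ((t / A t) powr (1 / (real n - 1))) \<partial>lborel)
     \<le> (\<integral>\<^sup>+(t::real). ennreal ((1/c) powr pp n) * indicator {0<..1} t \<partial>lborel)"
  proof (rule nn_integral_mono)
    fix t :: real assume "t \<in> space lborel"
    show "indicator {0<..1} t * ennreal ((t / A t) powr (1 / (real n - 1))) \<le> ennreal ((1/c) powr pp n) * indicator {0<..1} t"
    proof (cases "t \<in> {0<..1}")
      case True
      then have t: "t > 0" by auto
      have "t / A t \<le> 1 / c" using ge[OF t] A_pos[OF t] c t by (simp add: field_simps)
      then have "(t / A t) powr pp n \<le> (1/c) powr pp n"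
        using t A_pos[OF t] p_pos by (intro powr_mono2) auto
      then show ?thesis using True by (simp add: pp_def)
    qed simp
  qed
  also have "\<dots> = ennreal ((1/c) powr pp n) * emeasure lborel {0<..1::real}"
    by (rule nn_integral_cmult_indicator) simp
  also have "\<dots> < \<infinity>" by simp
  finally show False using C3' by (metis less_irrefl)
qed

lemma g_large: "\<exists>t\<ge>1. A t / t > M"
proof (rule ccontr)
  assume "\<not> ?thesis"
  then have le: "\<And>t. t \<ge> 1 \<Longrightarrow> A t / t \<le> M" by (meson not_le)
  have M: "M > 0" using le[of 1] g_pos[of 1] by simp
  have "(\<infinity>::ennreal) = (\<integral>\<^sup>+(t::real). indicator {1..} t * ennreal ((1/M) powr pp n) \<partial>lborel)"
    using M by (intro ennreal_unbounded_Ici[symmetric]) simp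
  also have "\<dots> \<le> (\<integral>\<^sup>+(t::real). indicator {1..} t * ennreal ((t / A t) powr (1 / (real n - 1))) \<partial>lborel)"
  proof (rule nn_integral_mono)
    fix t :: real assume "t \<in> space lborel"
    show "indicator {1..} t * ennreal ((1/M) powr pp n) \<le> indicator {1..} t * ennreal ((t / A t) powr (1 / (real n - 1)))"
    proof (cases "t \<in> {1..}")
      case True
      then have t: "t \<ge> 1" by auto
      have "1 / M \<le> t / A t" using le[OF t] A_pos[of t] M t by (simp add: field_simps)
      then have "(1/M) powr pp n \<le> (t / A t) powr pp n"
        using M p_pos by (intro powr_mono2) auto
      then show ?thesis using True by (simp add: pp_def)
    qed simp
  qed
  finally show False using C1' by (metis not_le)
qed

lemma g_ev_large: "\<exists>T\<ge>1. \<forall>\<tau>\<ge>T. A \<tau> / \<tau> > M"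
proof -
  obtain T where T: "T \<ge> 1" "A T / T > M" using g_large by blast
  have "\<forall>\<tau>\<ge>T. A \<tau> / \<tau> > M" using T g_mono[of T] by (meson less_le_trans linorder_not_le not_one_le_zero order_trans zero_less_one)
  then show ?thesis using T by blast
qed

lemma g_ev_small: assumes "c > 0" shows "\<exists>\<delta>>0. \<forall>\<tau>. 0 < \<tau> \<longrightarrow> \<tau> \<le> \<delta> \<longrightarrow> A \<tau> / \<tau> < c"
proof -
  obtain d where d: "d > 0" "A d / d < c" using g_small[OF assms] by blast
  have "\<forall>\<tau>. 0 < \<tau> \<longrightarrow> \<tau> \<le> d \<longrightarrow> A \<tau> / \<tau> < c" using d g_mono by (meson le_less_trans)
  then show ?thesis using d by blast
qed

lemma yc_ge: "\<tau> \<ge> 0 \<Longrightarrow> ereal (\<tau> * s - A \<tau>) \<le> young_conj (\<lambda>\<tau>. ereal (A \<tau>)) s"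
  unfolding young_conj_def by (rule SUP_upper2[of \<tau>]) auto

lemma yc_le: "(\<And>\<tau>. \<tau> \<ge> 0 \<Longrightarrow> \<tau> * s - A \<tau> \<le> c) \<Longrightarrow> young_conj (\<lambda>\<tau>. ereal (A \<tau>)) s \<le> ereal c"
  unfolding young_conj_def by (rule SUP_least) auto

lemma yc_bound: "\<exists>c. \<forall>\<tau>\<ge>0. \<tau> * s - A \<tau> \<le> c"
proof -
  obtain T where T: "T \<ge> 1" "\<forall>\<tau>\<ge>T. A \<tau> / \<tau> > \<bar>s\<bar>" using g_ev_large by blast
  have "\<tau> * s - A \<tau> \<le> T * \<bar>s\<bar>" if t: "\<tau> \<ge> 0" for \<tau>
  proof (cases "\<tau> \<ge> T")
    case True
    then have tp: "\<tau> > 0" using T by auto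
    have "s < A \<tau> / \<tau>" using T True by fastforce
    then have "\<tau> * s < A \<tau>" using tp by (simp add: field_simps)
    moreover have "0 \<le> T * \<bar>s\<bar>" using T by simp
    ultimately show ?thesis by simp
  next
    case False
    have "\<tau> * s \<le> \<tau> * \<bar>s\<bar>" using t by (intro mult_left_mono) auto
    also have "\<dots> \<le> T * \<bar>s\<bar>" using False by (intro mult_right_mono) auto
    finally show ?thesis using A_nonneg[OF t] by simp
  qed
  then show ?thesis by blast
qed

lemma yc_eq: "young_conj (\<lambda>\<tau>. ereal (A \<tau>)) s = ereal (atil A s)"
proof -
  obtain c where c: "\<forall>\<tau>\<ge>0. \<tau> * s - A \<tau> \<le> c" using yc_bound by blast
  have up: "young_conj (\<lambda>\<tau>. ereal (A \<tau>)) s \<le> ereal c" using c by (intro yc_le) auto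
  have lo: "ereal 0 \<le> young_conj (\<lambda>\<tau>. ereal (A \<tau>)) s" using yc_ge[of 0 s] A0 by simp
  have "\<bar>young_conj (\<lambda>\<tau>. ereal (A \<tau>)) s\<bar> \<noteq> \<infinity>" using up lo by auto
  then show ?thesis unfolding atil_def by (simp add: ereal_real)
qed

lemma at_ge: "\<tau> \<ge> 0 \<Longrightarrow> \<tau> * s - A \<tau> \<le> atil A s"
  using yc_ge[of \<tau> s] by (simp add: yc_eq)

lemma at_le: "(\<And>\<tau>. \<tau> \<ge> 0 \<Longrightarrow> \<tau> * s - A \<tau> \<le> c) \<Longrightarrow> atil A s \<le> c"
  using yc_le[of s c] by (simp add: yc_eq)

lemma at_nonneg: "atil A s \<ge> 0"
  using at_ge[of 0 s] A0 by simp

lemma at_mono: assumes "s1 \<le> s2" shows "atil A s1 \<le> atil A s2"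
proof (rule at_le)
  fix \<tau> :: real assume "\<tau> \<ge> 0"
  then have "\<tau> * s1 \<le> \<tau> * s2" using assms by (intro mult_left_mono)
  then show "\<tau> * s1 - A \<tau> \<le> atil A s2" using at_ge[OF \<open>\<tau> \<ge> 0\<close>, of s2] by simp
qed

lemma at_meas[measurable]: "atil A \<in> borel_measurable borel"
  by (rule borel_measurable_mono) (auto simp: mono_def intro: at_mono)

lemma at_scale: assumes "0 \<le> l" "l \<le> 1" shows "atil A (l * s) \<le> l * atil A s"
proof (rule at_le)
  fix \<tau> :: real assume t: "\<tau> \<ge> 0"
  have "\<tau> * (l * s) - A \<tau> \<le> l * (\<tau> * s - A \<tau>)"
    using A_nonneg[OF t] assms by (simp add: algebra_simps mult_left_le_one_le)
  also have "\<dots> \<le> l * atil A s" using at_ge[OF t] assms by (intro mult_left_mono) auto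
  finally show "\<tau> * (l * s) - A \<tau> \<le> l * atil A s" .
qed

lemma at_ratio_mono: assumes "0 < x" "x \<le> y" shows "atil A x / x \<le> atil A y / y"
proof -
  have "atil A ((x / y) * y) \<le> (x / y) * atil A y" using assms by (intro at_scale) auto
  then have "atil A x \<le> x / y * atil A y" using assms by simp
  then show ?thesis using assms by (simp add: field_simps)
qed

lemma at_pos: assumes "s > 0" shows "atil A s > 0"
proof -
  obtain \<tau> where t: "\<tau> > 0" "A \<tau> / \<tau> < s" using g_small[OF assms] by blast
  then have "A \<tau> < \<tau> * s" by (simp add: field_simps)
  then show ?thesis using at_ge[of \<tau> s] t by simp
qed

lemma at_small: assumes t0: "\<tau>0 > 0" and s: "0 \<le> s" "s < A \<tau>0 / \<tau>0" shows "atil A s \<le> \<tau>0 * s"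
proof (rule at_le)
  fix \<tau> :: real assume t: "\<tau> \<ge> 0"
  show "\<tau> * s - A \<tau> \<le> \<tau>0 * s"
  proof (cases "\<tau> \<ge> \<tau>0")
    case True
    then have tp: "\<tau> > 0" using t0 by simp
    have "s < A \<tau> / \<tau>" using g_mono[OF t0 True] s by simp
    then have "\<tau> * s < A \<tau>" using tp by (simp add: field_simps)
    moreover have "0 \<le> \<tau>0 * s" using t0 s by simp
    ultimately show ?thesis by linarith
  next
    case False
    then have "\<tau> * s \<le> \<tau>0 * s" using s by (intro mult_right_mono) auto
    then show ?thesis using A_nonneg[OF t] by simp
  qed
qed

lemma ff_meas[measurable]: "ff n A \<in> borel_measurable borel"
  unfolding ff_def by measurable

lemma FF_split: assumes "a \<le> b"
  shows "FF n A a = (\<integral>\<^sup>+s. indicator {a<..b} s * ff n A s \<partial>lborel) + FF n A b"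
proof -
  have "FF n A a = (\<integral>\<^sup>+s. indicator {a<..b} s * ff n A s + indicator {b<..} s * ff n A s \<partial>lborel)"
    unfolding FF_def using assms by (intro nn_integral_cong) (auto simp: indicator_def)
  also have "\<dots> = (\<integral>\<^sup>+s. indicator {a<..b} s * ff n A s \<partial>lborel) + FF n A b"
    unfolding FF_def by (rule nn_integral_add) auto
  finally show ?thesis .
qed

lemma FF_anti: "a \<le> b \<Longrightarrow> FF n A b \<le> FF n A a"
  using FF_split[of a b] by simp

lemma ff_ge: assumes "0 < a" "a < s" "s \<le> b"
  shows "ennreal (atil A a * b powr (-2 - pp n)) \<le> ff n A s"
  unfolding ff_def
proof (intro ennreal_leI mult_mono)
  show "atil A a \<le> atil A s" using assms by (intro at_mono) auto
  show "b powr (-2 - pp n) \<le> s powr (-2 - pp n)"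
    using assms p_pos by (intro powr_mono2') auto
qed (use at_nonneg in auto)

lemma FF_gap: assumes "0 < a" "a < b"
  shows "FF n A b + ennreal ((b - a) * (atil A a * b powr (-2 - pp n))) \<le> FF n A a"
proof -
  have "ennreal ((b - a) * (atil A a * b powr (-2 - pp n)))
      = (\<integral>\<^sup>+s. ennreal (atil A a * b powr (-2 - pp n)) * indicator {a<..b} s \<partial>lborel)"
  proof -
    have C: "atil A a * b powr (-2 - pp n) \<ge> 0" using at_nonneg by simp
    have "(\<integral>\<^sup>+s. ennreal (atil A a * b powr (-2 - pp n)) * indicator {a<..b} s \<partial>lborel)
        = ennreal (atil A a * b powr (-2 - pp n)) * emeasure lborel {a<..b}"
      by (rule nn_integral_cmult_indicator) simp
    also have "\<dots> = ennreal (atil A a * b powr (-2 - pp n)) * ennreal (b - a)" using assms by simp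
    also have "\<dots> = ennreal ((b - a) * (atil A a * b powr (-2 - pp n)))"
      using C assms by (simp add: ennreal_mult[symmetric] mult.commute)
    finally show ?thesis by simp
  qed
  also have "\<dots> \<le> (\<integral>\<^sup>+s. indicator {a<..b} s * ff n A s \<partial>lborel)"
    using ff_ge[OF assms(1)] by (intro nn_integral_mono) (auto simp: indicator_def)
  finally show ?thesis using FF_split[of a b] assms by (simp add: add.commute add_left_mono)
qed

lemma FF_lower: assumes t: "\<tau> > 0"
  shows "ennreal (atil A \<tau> / \<tau> * (\<tau> powr (- pp n) / pp n)) \<le> FF n A \<tau>"
proof -
  have "ennreal (atil A \<tau> / \<tau> * (\<tau> powr (- pp n) / pp n)) =
      ennreal (atil A \<tau> / \<tau>) * (\<integral>\<^sup>+u. indicator {\<tau><..} u * ennreal (u powr (-1 - pp n)) \<partial>lborel)"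
    using t p_pos at_nonneg[of \<tau>] by (simp add: powr_int_open ennreal_mult[symmetric])
  also have "\<dots> = (\<integral>\<^sup>+u. indicator {\<tau><..} u * ennreal (atil A \<tau> / \<tau> * u powr (-1 - pp n)) \<partial>lborel)"
    using t at_nonneg[of \<tau>]
    by (subst nn_integral_cmult[symmetric]) (auto intro!: nn_integral_cong simp: ennreal_mult[symmetric] indicator_def)
  also have "\<dots> \<le> FF n A \<tau>"
    unfolding FF_def ff_def
  proof (intro nn_integral_mono)
    fix u :: real
    show "indicator {\<tau><..} u * ennreal (atil A \<tau> / \<tau> * u powr (-1 - pp n)) \<le> indicator {\<tau><..} u * ennreal (atil A u * u powr (-2 - pp n))"
    proof (cases "\<tau> < u")
      case True
      then have u: "u > 0" using t by simp
      have "atil A \<tau> / \<tau> \<le> atil A u / u" using t True by (intro at_ratio_mono) auto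
      then have "atil A \<tau> / \<tau> * u powr (-1 - pp n) \<le> atil A u / u * u powr (-1 - pp n)"
        by (intro mult_right_mono) auto
      also have "\<dots> = atil A u * u powr (-2 - pp n)"
        using u by (simp add: powr_diff powr_minus field_simps powr_add power2_eq_square)
      finally show ?thesis using True by (simp add: ennreal_leI)
    qed simp
  qed
  finally show ?thesis .
qed

lemma gh_mono: "mono (gh A)"
proof (rule monoI)
  fix x y :: real assume "x \<le> y"
  then show "gh A x \<le> gh A y"
    using g_mono[of x y] g_pos[of y] by (auto simp: gh_def less_imp_le)
qed

lemma gh_meas[measurable]: "gh A \<in> borel_measurable borel"
  by (rule borel_measurable_mono[OF gh_mono])

lemma gh_pos: "t > 0 \<Longrightarrow> gh A t = A t / t"
  by (simp add: gh_def)

lemma at_le_m: assumes u: "u > 0"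
  shows "ennreal (atil A u) \<le> ennreal u * (1 + emeasure lborel {t\<in>{1..}. gh A t \<le> u})"
proof (cases "emeasure lborel {t\<in>{1..}. gh A t \<le> u} = \<infinity>")
  case True
  then show ?thesis using u by (simp add: ennreal_mult_top)
next
  case False
  then obtain m where m: "emeasure lborel {t\<in>{1..}. gh A t \<le> u} = ennreal m" "m \<ge> 0"
    by (cases "emeasure lborel {t\<in>{1..}. gh A t \<le> u}" rule: ennreal_cases) auto
  have "atil A u \<le> u * (1 + m)"
  proof (rule at_le)
    fix \<tau> :: real assume t: "\<tau> \<ge> 0"
    show "\<tau> * u - A \<tau> \<le> u * (1 + m)"
    proof (cases "\<tau> \<le> 1")
      case True
      have "\<tau> * u \<le> 1 * u" using True u by (intro mult_right_mono) auto
      then show ?thesis using A_nonneg[OF t] mult_nonneg_nonneg[OF m(2) less_imp_le[OF u]] by (simp add: algebra_simps)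
    next
      case False
      then have t1: "\<tau> > 1" by simp
      show ?thesis
      proof (cases "A \<tau> / \<tau> \<le> u")
        case True
        have "{1..\<tau>} \<subseteq> {t\<in>{1..}. gh A t \<le> u}"
        proof
          fix x assume x: "x \<in> {1..\<tau>}"
          then have "A x / x \<le> A \<tau> / \<tau>" by (intro g_mono) auto
          then show "x \<in> {t\<in>{1..}. gh A t \<le> u}" using True x by (auto simp: gh_def)
        qed
        then have "emeasure lborel {1..\<tau>} \<le> emeasure lborel {t\<in>{1..}. gh A t \<le> u}"
          by (intro emeasure_mono) measurable
        then have "ennreal (\<tau> - 1) \<le> ennreal m" using t1 m by simp
        then have "\<tau> - 1 \<le> m" using m(2) by (subst (asm) ennreal_le_iff) auto
        then have "\<tau> * u \<le> (1 + m) * u" using u by (intro mult_right_mono) auto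
        then have "\<tau> * u \<le> u * (1 + m)" by (simp add: mult.commute)
        then show ?thesis using A_nonneg[OF t] by simp
      next
        case False
        then have "\<tau> * u < A \<tau>" using t1 by (simp add: field_simps)
        moreover have "0 \<le> u * (1 + m)" using u m by simp
        ultimately show ?thesis by simp
      qed
    qed
  qed
  then have "ennreal (atil A u) \<le> ennreal (u * (1 + m))" by (rule ennreal_leI)
  also have "\<dots> = ennreal u * (1 + ennreal m)" using u m by (simp add: ennreal_mult ennreal_plus)
  finally show ?thesis using m by simp
qed

lemma C1_gh: "(\<integral>\<^sup>+t. indicator {1..} t * ennreal (gh A t powr (- pp n) / pp n) \<partial>lborel) < \<infinity>"
proof -
  have eq: "gh A t powr (- pp n) = (t / A t) powr pp n" if t: "t > 0" for t
  proof -
    have "gh A t powr (- pp n) = inverse ((A t / t) powr pp n)"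
      using t by (simp add: gh_pos powr_minus)
    also have "\<dots> = (inverse (A t / t)) powr pp n"
      using t A_pos[OF t] by (subst inverse_powr) auto
    also have "\<dots> = (t / A t) powr pp n" by simp
    finally show ?thesis .
  qed
  have "(\<integral>\<^sup>+t. indicator {1..} t * ennreal (gh A t powr (- pp n) / pp n) \<partial>lborel)
      = (\<integral>\<^sup>+t. ennreal (1 / pp n) * (indicator {1..} t * ennreal (gh A t powr (- pp n))) \<partial>lborel)"
  proof (intro nn_integral_cong)
    fix t :: real
    show "indicator {1..} t * ennreal (gh A t powr (- pp n) / pp n)
        = ennreal (1 / pp n) * (indicator {1..} t * ennreal (gh A t powr (- pp n)))"
      using p_pos by (cases "t \<ge> 1") (simp_all add: ennreal_mult[symmetric])
  qed
  also have "\<dots> = ennreal (1 / pp n) * (\<integral>\<^sup>+t. indicator {1..} t * ennreal (gh A t powr (- pp n)) \<partial>lborel)"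
    by (rule nn_integral_cmult) measurable
  also have "(\<integral>\<^sup>+t. indicator {1..} t * ennreal (gh A t powr (- pp n)) \<partial>lborel)
      = (\<integral>\<^sup>+t. indicator {1..} t * ennreal ((t / A t) powr (1 / (real n - 1))) \<partial>lborel)"
  proof (intro nn_integral_cong)
    fix t :: real
    show "indicator {1..} t * ennreal (gh A t powr (- pp n)) = indicator {1..} t * ennreal ((t / A t) powr (1 / (real n - 1)))"
      using eq[of t] by (cases "t \<ge> 1") (auto simp: pp_def)
  qed
  also have "ennreal (1 / pp n) * \<dots> < \<infinity>" using C1' by (simp add: ennreal_mult_less_top)
  finally show ?thesis .
qed

lemma ff_bound: assumes u: "u > 0"
  shows "ff n A u \<le> ennreal (u powr (-1 - pp n)) + ennreal (u powr (-1 - pp n)) * emeasure lborel {t\<in>{1..}. gh A t \<le> u}"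
proof -
  let ?m = "emeasure lborel {t\<in>{1..}. gh A t \<le> u}"
  have "ff n A u = ennreal (atil A u) * ennreal (u powr (-2 - pp n))"
    unfolding ff_def using at_nonneg by (simp add: ennreal_mult)
  also have "\<dots> \<le> (ennreal u * (1 + ?m)) * ennreal (u powr (-2 - pp n))"
    by (intro mult_right_mono at_le_m[OF u]) auto
  also have "\<dots> = (ennreal u * ennreal (u powr (-2 - pp n))) * (1 + ?m)"
    by (simp add: ac_simps)
  also have "ennreal u * ennreal (u powr (-2 - pp n)) = ennreal (u powr (-1 - pp n))"
  proof -
    have "u * u powr (-2 - pp n) = u powr (-1 - pp n)"
      using u by (simp add: powr_diff powr_minus field_simps power2_eq_square)
    then show ?thesis using u by (simp add: ennreal_mult[symmetric])
  qed
  also have "ennreal (u powr (-1 - pp n)) * (1 + ?m) = ennreal (u powr (-1 - pp n)) + ennreal (u powr (-1 - pp n)) * ?m"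
    by (simp add: distrib_left)
  finally show ?thesis .
qed

lemma FF_fin: assumes t: "\<tau> > 0" shows "FF n A \<tau> < \<infinity>"
proof -
  let ?m = "\<lambda>u. emeasure lborel {t\<in>{1..}. gh A t \<le> u}"
  have "FF n A \<tau> \<le> (\<integral>\<^sup>+u. indicator {\<tau><..} u * ennreal (u powr (-1 - pp n)) +
          indicator {0<..} u * ennreal (u powr (-1 - pp n)) * ?m u \<partial>lborel)"
    unfolding FF_def
  proof (rule nn_integral_mono)
    fix u :: real assume "u \<in> space lborel"
    show "indicator {\<tau><..} u * ff n A u \<le> indicator {\<tau><..} u * ennreal (u powr (-1 - pp n)) +
          indicator {0<..} u * ennreal (u powr (-1 - pp n)) * ?m u"
    proof (cases "\<tau> < u")
      case True
      then show ?thesis using ff_bound[of u] t by (simp add: mult.assoc)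
    qed simp
  qed
  also have "\<dots> = (\<integral>\<^sup>+u. indicator {\<tau><..} u * ennreal (u powr (-1 - pp n)) \<partial>lborel) +
          (\<integral>\<^sup>+u. indicator {0<..} u * ennreal (u powr (-1 - pp n)) * ?m u \<partial>lborel)"
    by (rule nn_integral_add) measurable
  also have "\<dots> = ennreal (\<tau> powr (- pp n) / pp n) +
      (\<integral>\<^sup>+t. indicator {1..} t * ennreal (gh A t powr (- pp n) / pp n) \<partial>lborel)"
  proof -
    have "(\<integral>\<^sup>+u. indicator {0<..} u * ennreal (u powr (-1 - pp n)) * ?m u \<partial>lborel)
       = (\<integral>\<^sup>+t. indicator {1..} t * ennreal (gh A t powr (- pp n) / pp n) \<partial>lborel)"
      by (rule tonelli_layer) (auto simp: gh_pos g_pos p_pos)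
    then show ?thesis using powr_int_open[OF t p_pos] by simp
  qed
  also have "\<dots> < \<infinity>" using C1_gh by simp
  finally show ?thesis .
qed

end


context
  fixes n :: nat and A :: "real \<Rightarrow> real"
  assumes n2: "n \<ge> 2" and yf: "young_function A" and C1: "cond_C1 n A"
    and C2: "cond_C2 A" and C3: "cond_C3 n A"
begin

lemmas facts = n2 yf C1 C2 C3
lemmas p_pos' = p_pos[OF facts] and at_nonneg' = at_nonneg[OF facts] and A_pos' = A_pos[OF facts]
  and at_ge' = at_ge[OF facts] and C3'' = C3'[OF facts] and A_nonneg' = A_nonneg[OF facts]
lemmas gh_meas'[measurable] = gh_meas[OF facts] and ff_meas'[measurable] = ff_meas[OF facts]
  and at_meas'[measurable] = at_meas[OF facts]

lemma m2_bound: assumes u: "u > 0"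
  shows "emeasure lborel {t\<in>{0<..1}. 2 * gh A t \<le> u} \<le> ennreal (2 * atil A u / u)"
proof -
  have "{t\<in>{0<..1}. 2 * gh A t \<le> u} \<subseteq> {0<..2 * atil A u / u}"
  proof
    fix t assume t: "t \<in> {t\<in>{0<..1}. 2 * gh A t \<le> u}"
    then have t0: "t > 0" and le: "2 * (A t / t) \<le> u" by (auto simp: gh_def)
    then have "2 * A t \<le> t * u" by (simp add: field_simps)
    moreover have "t * u - A t \<le> atil A u" using at_ge'[of t u] t0 by simp
    ultimately have "t * u \<le> 2 * atil A u" by linarith
    then have "t \<le> 2 * atil A u / u" using u by (simp add: field_simps)
    then show "t \<in> {0<..2 * atil A u / u}" using t0 by simp
  qed
  then have "emeasure lborel {t\<in>{0<..1}. 2 * gh A t \<le> u} \<le> emeasure lborel {0<..2 * atil A u / u}"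
    by (intro emeasure_mono) auto
  also have "\<dots> = ennreal (2 * atil A u / u)" using u at_nonneg' by simp
  finally show ?thesis .
qed

lemma FF0_inf: "(\<integral>\<^sup>+u. indicator {0<..} u * ff n A u \<partial>lborel) = \<infinity>"
proof -
  have gm[measurable]: "(\<lambda>t. 2 * gh A t) \<in> borel_measurable borel" by measurable
  have T: "(\<integral>\<^sup>+u. indicator {0<..} u * ennreal (u powr (-1 - pp n)) * emeasure lborel {t\<in>{0<..1}. 2 * gh A t \<le> u} \<partial>lborel)
      = (\<integral>\<^sup>+t. indicator {0<..1} t * ennreal ((2 * gh A t) powr (- pp n) / pp n) \<partial>lborel)"
    by (rule tonelli_layer[OF _ gm]) (auto simp: gh_pos[OF facts] p_pos' A_pos')
  have eq: "(2 * gh A t) powr (- pp n) / pp n = (2 powr (- pp n) / pp n) * (t / A t) powr pp n" if t: "t > 0" for t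
  proof -
    have "(2 * gh A t) powr (- pp n) = 2 powr (- pp n) * (A t / t) powr (- pp n)"
      using t A_pos'[OF t] by (simp add: gh_pos[OF facts] powr_mult[symmetric] times_divide_eq_right[symmetric] del: times_divide_eq_right)
    also have "(A t / t) powr (- pp n) = (t / A t) powr pp n"
      using t A_pos'[OF t] by (simp add: powr_minus inverse_powr[symmetric])
    finally show ?thesis by simp
  qed
  have "(\<integral>\<^sup>+t. indicator {0<..1} t * ennreal ((2 * gh A t) powr (- pp n) / pp n) \<partial>lborel)
      = (\<integral>\<^sup>+t. ennreal (2 powr (- pp n) / pp n) * (indicator {0<..1} t * ennreal ((t / A t) powr (1 / (real n - 1)))) \<partial>lborel)"
  proof (intro nn_integral_cong)
    fix t :: real
    show "indicator {0<..1} t * ennreal ((2 * gh A t) powr (- pp n) / pp n)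
      = ennreal (2 powr (- pp n) / pp n) * (indicator {0<..1} t * ennreal ((t / A t) powr (1 / (real n - 1))))"
      using eq[of t] p_pos' by (cases "t \<in> {0<..1}") (auto simp: ennreal_mult[symmetric] pp_def)
  qed
  also have "\<dots> = \<infinity>"
  proof -
    have "(\<lambda>t. indicator {0<..1} t * ennreal ((t / A t) powr (1 / (real n - 1))))
       = (\<lambda>t. indicator {0<..1} t * ennreal ((inverse (gh A t)) powr (1 / (real n - 1))))"
      by (auto simp: fun_eq_iff indicator_def gh_def)
    then have C3g: "(\<integral>\<^sup>+t. indicator {0<..1} t * ennreal ((inverse (gh A t)) powr (1 / (real n - 1))) \<partial>lborel) = \<infinity>"
      using C3'' by simp
    have "(\<integral>\<^sup>+t. ennreal (2 powr (- pp n) / pp n) * (indicator {0<..1} t * ennreal ((t / A t) powr (1 / (real n - 1)))) \<partial>lborel)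
      = (\<integral>\<^sup>+t. ennreal (2 powr (- pp n) / pp n) * (indicator {0<..1} t * ennreal ((inverse (gh A t)) powr (1 / (real n - 1)))) \<partial>lborel)"
      using \<open>(\<lambda>t. _) = _\<close> by (simp add: fun_eq_iff)
    also have "\<dots> = ennreal (2 powr (- pp n) / pp n) * \<infinity>"
      by (subst nn_integral_cmult) (measurable, simp add: C3g)
    also have "\<dots> = \<infinity>" using p_pos' by (simp add: ennreal_mult_top)
    finally show ?thesis .
  qed
  finally have R: "(\<integral>\<^sup>+u. indicator {0<..} u * ennreal (u powr (-1 - pp n)) * emeasure lborel {t\<in>{0<..1}. 2 * gh A t \<le> u} \<partial>lborel) = \<infinity>"
    using T by simp
  have "(\<integral>\<^sup>+u. indicator {0<..} u * ennreal (u powr (-1 - pp n)) * emeasure lborel {t\<in>{0<..1}. 2 * gh A t \<le> u} \<partial>lborel)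
     \<le> (\<integral>\<^sup>+u. 2 * (indicator {0<..} u * ff n A u) \<partial>lborel)"
  proof (rule nn_integral_mono)
    fix u :: real assume "u \<in> space lborel"
    show "indicator {0<..} u * ennreal (u powr (-1 - pp n)) * emeasure lborel {t\<in>{0<..1}. 2 * gh A t \<le> u}
      \<le> 2 * (indicator {0<..} u * ff n A u)"
    proof (cases "u > 0")
      case True
      have "ennreal (u powr (-1 - pp n)) * emeasure lborel {t\<in>{0<..1}. 2 * gh A t \<le> u}
          \<le> ennreal (u powr (-1 - pp n)) * ennreal (2 * atil A u / u)"
        by (intro mult_left_mono m2_bound True) auto
      also have "\<dots> = ennreal (u powr (-1 - pp n) * (2 * atil A u / u))"
        using True at_nonneg' by (simp add: ennreal_mult[symmetric])
      also have "u powr (-1 - pp n) * (2 * atil A u / u) = 2 * (atil A u * u powr (-2 - pp n))"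
        using True by (simp add: powr_diff powr_minus field_simps power2_eq_square)
      also have "ennreal \<dots> = 2 * ff n A u"
        using True at_nonneg' by (simp add: ff_def ennreal_mult)
      finally show ?thesis using True by simp
    qed simp
  qed
  also have "\<dots> = 2 * (\<integral>\<^sup>+u. indicator {0<..} u * ff n A u \<partial>lborel)"
    by (rule nn_integral_cmult) measurable
  finally have "2 * (\<integral>\<^sup>+u. indicator {0<..} u * ff n A u \<partial>lborel) = \<infinity>" using R by (simp add: top_unique)
  then show ?thesis by (simp add: ennreal_mult_eq_top_iff)
qed

lemma FF0_SUP: "(\<integral>\<^sup>+u. indicator {0<..} u * ff n A u \<partial>lborel) = (SUP k. FF n A (1 / Suc k))"
proof -
  have "(SUP k. FF n A (1 / Suc k)) = (\<integral>\<^sup>+u. (SUP k. indicator {1 / Suc k<..} u * ff n A u) \<partial>lborel)"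
    unfolding FF_def
  proof (rule nn_integral_monotone_convergence_SUP[symmetric])
    show "incseq (\<lambda>k u. indicator {1 / real (Suc k)<..} u * ff n A u)"
    proof (intro incseq_SucI le_funI)
      fix k u
      have "1 / real (Suc (Suc k)) \<le> 1 / real (Suc k)" by (simp add: frac_le)
      then show "indicator {1 / real (Suc k)<..} u * ff n A u \<le> indicator {1 / real (Suc (Suc k))<..} u * ff n A u"
        by (intro mult_right_mono) (auto simp: indicator_def)
    qed
  qed measurable
  also have "\<dots> = (\<integral>\<^sup>+u. indicator {0<..} u * ff n A u \<partial>lborel)"
  proof (intro nn_integral_cong)
    fix u :: real
    show "(SUP k. indicator {1 / real (Suc k)<..} u * ff n A u) = indicator {0<..} u * ff n A u"
    proof (cases "u > 0")
      case True
      obtain k where k: "inverse (real (Suc k)) < u" using True reals_Archimedean by blast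
      show ?thesis
      proof (rule antisym)
        show "(SUP k. indicator {1 / real (Suc k)<..} u * ff n A u) \<le> indicator {0<..} u * ff n A u"
          using True by (intro SUP_least mult_right_mono) (auto simp: indicator_def)
        show "indicator {0<..} u * ff n A u \<le> (SUP k. indicator {1 / real (Suc k)<..} u * ff n A u)"
          using True k by (intro SUP_upper2[of k]) (auto simp: indicator_def field_simps)
      qed
    next
      case False
      have "\<And>k. indicator {1 / real (Suc k)<..} u = (0::ennreal)"
      proof -
        fix k
        have "0 < 1 / real (Suc k)" by simp
        then have "\<not> (1 / real (Suc k) < u)" using False by linarith
        then show "indicator {1 / real (Suc k)<..} u = (0::ennreal)" by (simp add: indicator_def)
      qed
      then show ?thesis using False by simp
    qed
  qed
  finally show ?thesis by simp
qed

lemma FF_big: "\<exists>\<delta>>0. ennreal M \<le> FF n A \<delta>"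
proof (rule ccontr)
  assume "\<not> ?thesis"
  then have neg: "\<And>\<delta>. \<delta> > 0 \<Longrightarrow> FF n A \<delta> \<le> ennreal M" by (meson linorder_le_cases)
  have "\<And>k. FF n A (1 / Suc k) \<le> ennreal M" by (rule neg) simp
  then have le: "(SUP k. FF n A (1 / Suc k)) \<le> ennreal M" by (intro SUP_least)
  have "(SUP k. FF n A (1 / Suc k)) = \<infinity>" using FF0_inf FF0_SUP by simp
  then have "(\<infinity>::ennreal) \<le> ennreal M" using le by (simp only:)
  then show False using ennreal_less_top[of M] by (simp add: top_unique)
qed

definition Fr :: "real \<Rightarrow> real" where "Fr \<tau> = enn2real (FF n A \<tau>)"

lemma FF_eq: "\<tau> > 0 \<Longrightarrow> FF n A \<tau> = ennreal (Fr \<tau>)"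
  using FF_fin[OF facts] by (simp add: Fr_def ennreal_enn2real less_top[symmetric])

lemma Fr_nonneg: "Fr \<tau> \<ge> 0" by (simp add: Fr_def)

lemma Fr_anti: assumes "0 < a" "a \<le> b" shows "Fr b \<le> Fr a"
proof -
  have "FF n A b \<le> FF n A a" by (rule FF_anti[OF facts assms(2)])
  then have "ennreal (Fr b) \<le> ennreal (Fr a)" using FF_eq[of a] FF_eq[of b] assms by simp
  then show ?thesis using Fr_nonneg[of a] by (subst (asm) ennreal_le_iff) auto
qed

lemma Fr_gap: assumes "0 < a" "a < b"
  shows "Fr b + (b - a) * (atil A a * b powr (-2 - pp n)) \<le> Fr a"
proof -
  have c: "(b - a) * (atil A a * b powr (-2 - pp n)) \<ge> 0" using assms at_nonneg' by simp
  have g: "FF n A b + ennreal ((b - a) * (atil A a * b powr (-2 - pp n))) \<le> FF n A a"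
    by (rule FF_gap[OF facts assms])
  have "ennreal (Fr b + (b - a) * (atil A a * b powr (-2 - pp n))) = ennreal (Fr b) + ennreal ((b - a) * (atil A a * b powr (-2 - pp n)))"
    using c Fr_nonneg[of b] by (simp add: ennreal_plus)
  also have "\<dots> \<le> ennreal (Fr a)" using g FF_eq[of a] FF_eq[of b] assms by simp
  finally show ?thesis using Fr_nonneg[of a] by (subst (asm) ennreal_le_iff) auto
qed

lemma Fr_lower: assumes "\<tau> > 0" shows "atil A \<tau> / \<tau> * (\<tau> powr (- pp n) / pp n) \<le> Fr \<tau>"
proof -
  have "ennreal (atil A \<tau> / \<tau> * (\<tau> powr (- pp n) / pp n)) \<le> ennreal (Fr \<tau>)"
    using FF_lower[OF facts assms] FF_eq[OF assms] by simp
  then show ?thesis using Fr_nonneg[of \<tau>] by (subst (asm) ennreal_le_iff) auto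
qed

lemma Fr_big: "\<exists>\<delta>>0. M \<le> Fr \<delta>"
proof -
  obtain \<delta> where d: "\<delta> > 0" "ennreal M \<le> FF n A \<delta>" using FF_big by blast
  then have "ennreal M \<le> ennreal (Fr \<delta>)" using FF_eq by simp
  then have "M \<le> Fr \<delta>" using Fr_nonneg[of \<delta>] by (cases "M \<ge> 0") (subst (asm) ennreal_le_iff, auto)
  then show ?thesis using d by blast
qed

lemma Fr_upper: assumes t0: "\<tau>0 > 0" and t: "0 < \<tau>" "\<tau> \<le> d" and d: "d < A \<tau>0 / \<tau>0"
  shows "Fr \<tau> \<le> \<tau>0 * (\<tau> powr (- pp n) / pp n) + Fr d"
proof -
  have d0: "d > 0" using t by simp
  have "(\<integral>\<^sup>+s. indicator {\<tau><..d} s * ff n A s \<partial>lborel)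
      \<le> (\<integral>\<^sup>+s. ennreal \<tau>0 * (indicator {\<tau><..} s * ennreal (s powr (-1 - pp n))) \<partial>lborel)"
  proof (rule nn_integral_mono)
    fix u :: real assume "u \<in> space lborel"
    show "indicator {\<tau><..d} u * ff n A u \<le> ennreal \<tau>0 * (indicator {\<tau><..} u * ennreal (u powr (-1 - pp n)))"
    proof (cases "u \<in> {\<tau><..d}")
      case True
      then have u: "u > 0" "u \<le> d" using t by auto
      have "atil A u \<le> \<tau>0 * u" using at_small[OF facts t0, of u] u d by simp
      then have "atil A u * u powr (-2 - pp n) \<le> \<tau>0 * u * u powr (-2 - pp n)"
        by (intro mult_right_mono) auto
      also have "\<tau>0 * u * u powr (-2 - pp n) = \<tau>0 * u powr (-1 - pp n)"
        using u by (simp add: powr_diff powr_minus field_simps power2_eq_square)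
      finally have "ff n A u \<le> ennreal (\<tau>0 * u powr (-1 - pp n))"
        unfolding ff_def by (rule ennreal_leI)
      then show ?thesis using True t0 u by (simp add: ennreal_mult)
    qed simp
  qed
  also have "\<dots> = ennreal \<tau>0 * ennreal (\<tau> powr (- pp n) / pp n)"
    by (subst nn_integral_cmult) (measurable, simp add: powr_int_open[OF t(1) p_pos'])
  also have "\<dots> = ennreal (\<tau>0 * (\<tau> powr (- pp n) / pp n))"
    using t0 p_pos' by (simp add: ennreal_mult[symmetric])
  finally have I: "(\<integral>\<^sup>+s. indicator {\<tau><..d} s * ff n A s \<partial>lborel) \<le> ennreal (\<tau>0 * (\<tau> powr (- pp n) / pp n))" .
  have "ennreal (Fr \<tau>) = (\<integral>\<^sup>+s. indicator {\<tau><..d} s * ff n A s \<partial>lborel) + ennreal (Fr d)"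
    using FF_split[OF facts t(2)] FF_eq[OF t(1)] FF_eq[OF d0] by simp
  also have "\<dots> \<le> ennreal (\<tau>0 * (\<tau> powr (- pp n) / pp n)) + ennreal (Fr d)"
    using I by (rule add_right_mono)
  also have "\<dots> = ennreal (\<tau>0 * (\<tau> powr (- pp n) / pp n) + Fr d)"
    using t0 p_pos' Fr_nonneg[of d] by (simp add: ennreal_plus)
  finally show ?thesis using t0 p_pos' Fr_nonneg[of d]
    by (subst (asm) ennreal_le_iff) auto
qed

lemma Fr_small: assumes tp: "t > 0" shows "\<exists>\<tau>>0. \<tau> powr pp n * Fr \<tau> < t"
proof -
  define \<tau>0 where "\<tau>0 = pp n * t / 2"
  have t0: "\<tau>0 > 0" using tp p_pos' by (simp add: \<tau>0_def)
  define d where "d = (A \<tau>0 / \<tau>0) / 2"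
  have d: "d > 0" "d < A \<tau>0 / \<tau>0" using g_pos[OF facts t0] by (auto simp: d_def)
  define K where "K = Fr d + 1"
  have K: "K \<ge> 1" using Fr_nonneg[of d] by (simp add: K_def)
  define x where "x = t / (4 * K)"
  have x: "x > 0" using tp K by (simp add: x_def)
  define \<tau> where "\<tau> = min (d / 2) (x powr (1 / pp n))"
  have t: "\<tau> > 0" "\<tau> \<le> d" using d x by (auto simp: \<tau>_def)
  have tpx: "\<tau> powr pp n \<le> x"
  proof -
    have "\<tau> powr pp n \<le> (x powr (1 / pp n)) powr pp n"
      using t p_pos' by (intro powr_mono2) (auto simp: \<tau>_def)
    also have "\<dots> = x" using x p_pos' by (simp add: powr_powr)
    finally show ?thesis .
  qed
  have "\<tau> powr pp n * Fr \<tau> \<le> \<tau> powr pp n * (\<tau>0 * (\<tau> powr (- pp n) / pp n) + Fr d)"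
    using Fr_upper[OF t0 t d(2)] by (intro mult_left_mono) auto
  also have "\<dots> = \<tau>0 / pp n + \<tau> powr pp n * Fr d"
    using t p_pos' by (simp add: algebra_simps powr_minus divide_inverse)
  also have "\<tau>0 / pp n = t / 2" using p_pos' by (simp add: \<tau>0_def)
  also have "\<tau> powr pp n * Fr d \<le> x * K"
    using tpx Fr_nonneg[of d] K x by (intro mult_mono) (auto simp: K_def)
  also have "x * K = t / 4" using K by (simp add: x_def)
  finally have "\<tau> powr pp n * Fr \<tau> \<le> t / 2 + t / 4" by simp
  also have "\<dots> < t" using tp by simp
  finally show ?thesis using t by blast
qed

end


context
  fixes n :: nat and A :: "real \<Rightarrow> real"
  assumes n2: "n \<ge> 2" and yf: "young_function A" and C1: "cond_C1 n A"
    and C2: "cond_C2 A" and C3: "cond_C3 n A"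
begin

lemmas facts4 = n2 yf C1 C2 C3
lemmas p_pos4' = p_pos[OF facts4] and at_nonneg4' = at_nonneg[OF facts4] and A_pos4' = A_pos[OF facts4]
  and at_ge4' = at_ge[OF facts4] and A_nonneg4' = A_nonneg[OF facts4]
  and Fr_nonneg4' = Fr_nonneg[OF facts4] and Fr_lower4' = Fr_lower[OF facts4]
  and FF_eq4' = FF_eq[OF facts4] and at_mono4' = at_mono[OF facts4]

definition Er :: "real \<Rightarrow> real" where "Er \<tau> = \<tau> powr (1 + pp n) * Fr n A \<tau>"

lemma Er_nonneg: "Er \<tau> \<ge> 0" by (simp add: Er_def Fr_nonneg4')

lemma Er_0: "Er 0 = 0" by (simp add: Er_def)

lemma nprime_eq: "nprime n = 1 + pp n"
  using n2 by (simp add: nprime_def pp_def field_simps)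

lemma E_eq: assumes "\<tau> \<ge> 0" shows "E_fun n A \<tau> = ennreal (Er \<tau>)"
proof -
  have "(\<integral>\<^sup>+s. indicator {\<tau><..} s * e2ennreal (young_conj (\<lambda>\<tau>. ereal (A \<tau>)) s) * ennreal (s powr (- 1 - nprime n)) \<partial>lborel)
      = FF n A \<tau>"
    unfolding FF_def
  proof (intro nn_integral_cong)
    fix s :: real
    show "indicator {\<tau><..} s * e2ennreal (young_conj (\<lambda>\<tau>. ereal (A \<tau>)) s) * ennreal (s powr (- 1 - nprime n))
        = indicator {\<tau><..} s * ff n A s"
      using at_nonneg4'[of s] by (simp add: yc_eq[OF facts4] ff_def nprime_eq ennreal_mult mult.assoc)
  qed
  then have E: "E_fun n A \<tau> = ennreal (\<tau> powr (1 + pp n)) * FF n A \<tau>"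
    by (simp add: E_fun_def nprime_eq)
  show ?thesis
  proof (cases "\<tau> = 0")
    case True then show ?thesis using E by (simp add: Er_def)
  next
    case False
    then have "\<tau> > 0" using assms by simp
    then show ?thesis using E FF_eq4'[of \<tau>] Fr_nonneg4'[of \<tau>] by (simp add: Er_def ennreal_mult)
  qed
qed

lemma Er_split: "\<tau> > 0 \<Longrightarrow> Er \<tau> = \<tau> * (\<tau> powr pp n * Fr n A \<tau>)"
  by (simp add: Er_def powr_add)

lemma Er_ge_at: assumes t: "\<tau> > 0" shows "atil A \<tau> / pp n \<le> Er \<tau>"
proof -
  have "\<tau> * (\<tau> powr pp n * (atil A \<tau> / \<tau> * (\<tau> powr (- pp n) / pp n))) \<le> \<tau> * (\<tau> powr pp n * Fr n A \<tau>)"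
    using Fr_lower4'[OF t] t by (intro mult_left_mono) auto
  moreover have "\<tau> * (\<tau> powr pp n * (atil A \<tau> / \<tau> * (\<tau> powr (- pp n) / pp n))) = atil A \<tau> / pp n"
    using t by (simp add: powr_minus field_simps)
  ultimately show ?thesis using Er_split[OF t] by simp
qed

lemma B_young: "B_fun n A t = (SUP \<tau>\<in>{0..}. ereal (\<tau> * t - Er \<tau>))"
proof -
  have "B_fun n A t = young_conj (\<lambda>\<tau>. enn2ereal (E_fun n A \<tau>)) t"
    using n2 by (simp add: B_fun_def)
  also have "\<dots> = (SUP \<tau>\<in>{0..}. ereal (\<tau> * t - Er \<tau>))"
    unfolding young_conj_def
    by (intro SUP_cong refl) (simp add: E_eq Er_nonneg)
  finally show ?thesis .
qed

lemma B_ge: "\<tau> \<ge> 0 \<Longrightarrow> ereal (\<tau> * t - Er \<tau>) \<le> B_fun n A t"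
  unfolding B_young by (rule SUP_upper2[of \<tau>]) auto

lemma B_le: "(\<And>\<tau>. \<tau> \<ge> 0 \<Longrightarrow> \<tau> * t - Er \<tau> \<le> c) \<Longrightarrow> B_fun n A t \<le> ereal c"
  unfolding B_young by (rule SUP_least) auto

lemma super: "\<exists>T>0. \<forall>\<tau>\<ge>T. \<tau> * t \<le> Er \<tau>"
proof -
  define M where "M = pp n * (\<bar>t\<bar> + 1)"
  have M: "M \<ge> 0" using p_pos4' by (simp add: M_def)
  define T where "T = max 1 (A M / pp n)"
  have T: "T > 0" by (simp add: T_def)
  have "\<tau> * t \<le> Er \<tau>" if tT: "\<tau> \<ge> T" for \<tau>
  proof -
    have tp: "\<tau> > 0" using tT T by simp
    have "M * \<tau> - A M \<le> atil A \<tau>" using at_ge4'[OF M, of \<tau>] by simp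
    then have "(M * \<tau> - A M) / pp n \<le> atil A \<tau> / pp n" using p_pos4' by (simp add: divide_right_mono)
    also have "\<dots> \<le> Er \<tau>" by (rule Er_ge_at[OF tp])
    finally have 1: "(M * \<tau> - A M) / pp n \<le> Er \<tau>" .
    have "(M * \<tau> - A M) / pp n = (\<bar>t\<bar> + 1) * \<tau> - A M / pp n"
      using p_pos4' by (simp add: M_def field_simps)
    moreover have "A M / pp n \<le> \<tau>" using tT by (simp add: T_def)
    moreover have "\<tau> * t \<le> \<tau> * \<bar>t\<bar>" using tp by (intro mult_left_mono) auto
    ultimately show ?thesis using 1 by (simp add: algebra_simps)
  qed
  then show ?thesis using T by blast
qed

definition bb :: "real \<Rightarrow> real" where "bb t = real_of_ereal (B_fun n A t)"

lemma B_fin: "B_fun n A t = ereal (bb t)"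
proof -
  obtain T where T: "T > 0" "\<forall>\<tau>\<ge>T. \<tau> * t \<le> Er \<tau>" using super by blast
  have up: "B_fun n A t \<le> ereal (T * \<bar>t\<bar>)"
  proof (rule B_le)
    fix \<tau> :: real assume t0: "\<tau> \<ge> 0"
    show "\<tau> * t - Er \<tau> \<le> T * \<bar>t\<bar>"
    proof (cases "\<tau> \<ge> T")
      case True
      then show ?thesis using T by (smt (verit) mult_nonneg_nonneg abs_ge_zero)
    next
      case False
      have "\<tau> * t \<le> \<tau> * \<bar>t\<bar>" using t0 by (intro mult_left_mono) auto
      also have "\<dots> \<le> T * \<bar>t\<bar>" using False by (intro mult_right_mono) auto
      finally show ?thesis using Er_nonneg[of \<tau>] by simp
    qed
  qed
  have lo: "ereal 0 \<le> B_fun n A t" using B_ge[of 0 t] by (simp add: Er_0)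
  have "\<bar>B_fun n A t\<bar> \<noteq> \<infinity>" using up lo by auto
  then show ?thesis unfolding bb_def by (simp add: ereal_real)
qed

lemma bb_ge: "\<tau> \<ge> 0 \<Longrightarrow> \<tau> * t - Er \<tau> \<le> bb t"
  using B_ge[of \<tau> t] by (simp add: B_fin)

lemma bb_le: "(\<And>\<tau>. \<tau> \<ge> 0 \<Longrightarrow> \<tau> * t - Er \<tau> \<le> c) \<Longrightarrow> bb t \<le> c"
  using B_le[of t c] by (simp add: B_fin)

lemma bb0: "bb 0 = 0"
proof (rule antisym)
  show "bb 0 \<le> 0" by (rule bb_le) (use Er_nonneg in simp)
  show "0 \<le> bb 0" using bb_ge[of 0 0] by (simp add: Er_0)
qed

lemma bb_nonneg: "bb t \<ge> 0"
  using bb_ge[of 0 t] by (simp add: Er_0)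

lemma bb_pos: assumes t: "t > 0" shows "bb t > 0"
proof -
  obtain \<tau> where tau: "\<tau> > 0" "\<tau> powr pp n * Fr n A \<tau> < t" using Fr_small[OF facts4 t] by blast
  have "\<tau> * t - Er \<tau> = \<tau> * (t - \<tau> powr pp n * Fr n A \<tau>)" using Er_split[OF tau(1)] by (simp add: algebra_simps)
  also have "\<dots> > 0" using tau by simp
  finally show ?thesis using bb_ge[of \<tau> t] tau by simp
qed

lemma bb_convex: "convex_on UNIV bb"
proof (rule convex_onI)
  show "convex (UNIV :: real set)" by simp
next
  fix th x y :: real assume th: "0 < th" "th < 1"
  show "bb ((1 - th) *\<^sub>R x + th *\<^sub>R y) \<le> (1 - th) * bb x + th * bb y"
  proof (rule bb_le)
    fix \<tau> :: real assume t0: "\<tau> \<ge> 0"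
    have "\<tau> * ((1 - th) *\<^sub>R x + th *\<^sub>R y) - Er \<tau> = (1 - th) * (\<tau> * x - Er \<tau>) + th * (\<tau> * y - Er \<tau>)"
      by (simp add: algebra_simps)
    also have "\<dots> \<le> (1 - th) * bb x + th * bb y"
      using th bb_ge[OF t0, of x] bb_ge[OF t0, of y] by (intro add_mono mult_left_mono) auto
    finally show "\<tau> * ((1 - th) *\<^sub>R x + th *\<^sub>R y) - Er \<tau> \<le> (1 - th) * bb x + th * bb y" .
  qed
qed

lemma bb_cont: "continuous_on {0<..} bb"
  by (rule convex_on_continuous) (auto intro: convex_on_subset[OF bb_convex])

lemma pw_cancel: assumes "\<sigma> > 0" shows "\<sigma> powr (1 + pp n) * (c * \<sigma> powr (-2 - pp n)) = c / \<sigma>"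
proof -
  have "\<sigma> powr (1 + pp n) * \<sigma> powr (-2 - pp n) = \<sigma> powr (-1)"
    by (simp add: powr_add[symmetric])
  then show ?thesis using assms by (simp add: powr_minus divide_inverse ac_simps)
qed

lemma bb_strict: assumes t: "0 < t1" "t1 < t2" shows "bb t1 / t1 ^ n < bb t2 / t2 ^ n"
proof -
  define l where "l = t1 / t2"
  have l: "0 < l" "l < 1" using t by (auto simp: l_def)
  define \<mu> where "\<mu> = l powr (real n - 1)"
  have n1: "real n - 1 > 0" using n2 by simp
  have mu: "0 < \<mu>" "\<mu> < 1"
  proof -
    show "0 < \<mu>" using l by (simp add: \<mu>_def)
    have "l powr (real n - 1) < 1 powr (real n - 1)" using l n1 by (intro powr_less_mono2) auto
    then show "\<mu> < 1" by (simp add: \<mu>_def)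
  qed
  have ln: "l powr real n = l ^ n" using l by (simp add: powr_realpow)
  have mu1: "\<mu> powr (1 + pp n) = l ^ n"
  proof -
    have "(real n - 1) * (1 + pp n) = real n" using n2 by (simp add: pp_def field_simps)
    then show ?thesis using l ln by (simp add: \<mu>_def powr_powr)
  qed
  have mu2: "\<mu> * l = l ^ n"
  proof -
    have "\<mu> * l = l powr (real n - 1) * l powr 1" using l by (simp add: \<mu>_def powr_one)
    also have "\<dots> = l powr (real n - 1 + 1)" by (rule powr_add[symmetric])
    also have "\<dots> = l powr real n" by simp
    finally show ?thesis using ln by simp
  qed
  define \<beta> where "\<beta> = bb t1"
  have \<beta>: "\<beta> > 0" using bb_pos t by (simp add: \<beta>_def)
  define \<tau>lo where "\<tau>lo = \<beta> / (2 * t1)"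
  have tlo: "\<tau>lo > 0" using \<beta> t by (simp add: \<tau>lo_def)
  define X where "X = l ^ n * (bb t2 - (1 - \<mu>) * atil A \<tau>lo)"
  have bound: "\<tau> * t1 - Er \<tau> \<le> max (\<beta> / 2) X" if t0: "\<tau> \<ge> 0" for \<tau>
  proof (cases "\<tau> \<le> \<tau>lo")
    case True
    have "\<tau> * t1 \<le> \<tau>lo * t1" using True t by (intro mult_right_mono) auto
    also have "\<dots> = \<beta> / 2" using t by (simp add: \<tau>lo_def)
    finally show ?thesis using Er_nonneg[of \<tau>] by simp
  next
    case False
    then have tp: "\<tau> > 0" using tlo by simp
    define \<sigma> where "\<sigma> = \<tau> / \<mu>"
    have sg: "\<sigma> > \<tau>" "\<sigma> > 0" using tp mu by (auto simp: \<sigma>_def field_simps)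
    have ts: "\<tau> = \<mu> * \<sigma>" using mu by (simp add: \<sigma>_def)
    have e1: "\<tau> * t1 = l ^ n * (\<sigma> * t2)"
    proof -
      have "\<tau> * t1 = \<mu> * \<sigma> * (l * t2)" using ts t by (simp add: l_def)
      also have "\<dots> = (\<mu> * l) * (\<sigma> * t2)" by (simp add: ac_simps)
      finally show ?thesis using mu2 by simp
    qed
    have e2: "Er \<tau> = l ^ n * (\<sigma> powr (1 + pp n) * Fr n A \<tau>)"
      unfolding Er_def using ts mu sg by (simp add: powr_mult mu1)
    have gap: "Fr n A \<sigma> + (\<sigma> - \<tau>) * (atil A \<tau> * \<sigma> powr (-2 - pp n)) \<le> Fr n A \<tau>"
      by (rule Fr_gap[OF facts4 tp sg(1)])
    have "\<sigma> powr (1 + pp n) * Fr n A \<tau> \<ge> \<sigma> powr (1 + pp n) * (Fr n A \<sigma> + (\<sigma> - \<tau>) * (atil A \<tau> * \<sigma> powr (-2 - pp n)))"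
      using gap by (intro mult_left_mono) auto
    also have "\<sigma> powr (1 + pp n) * (Fr n A \<sigma> + (\<sigma> - \<tau>) * (atil A \<tau> * \<sigma> powr (-2 - pp n)))
       = Er \<sigma> + (1 - \<mu>) * atil A \<tau>"
    proof -
      have "\<sigma> powr (1 + pp n) * ((\<sigma> - \<tau>) * atil A \<tau> * \<sigma> powr (-2 - pp n)) = (\<sigma> - \<tau>) * atil A \<tau> / \<sigma>"
        by (rule pw_cancel[OF sg(2)])
      also have "\<dots> = (1 - \<mu>) * atil A \<tau>" using ts sg by (simp add: field_simps)
      finally show ?thesis by (simp add: Er_def algebra_simps)
    qed
    finally have e3: "Er \<sigma> + (1 - \<mu>) * atil A \<tau> \<le> \<sigma> powr (1 + pp n) * Fr n A \<tau>" .
    have "\<tau> * t1 - Er \<tau> = l ^ n * (\<sigma> * t2 - \<sigma> powr (1 + pp n) * Fr n A \<tau>)"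
      using e1 e2 by (simp add: algebra_simps)
    also have "\<dots> \<le> l ^ n * (\<sigma> * t2 - Er \<sigma> - (1 - \<mu>) * atil A \<tau>)"
      using e3 l by (intro mult_left_mono) auto
    also have "\<dots> \<le> l ^ n * (bb t2 - (1 - \<mu>) * atil A \<tau>lo)"
    proof (intro mult_left_mono)
      have "\<sigma> * t2 - Er \<sigma> \<le> bb t2" using bb_ge[of \<sigma> t2] sg by simp
      moreover have "(1 - \<mu>) * atil A \<tau>lo \<le> (1 - \<mu>) * atil A \<tau>"
        using False mu at_mono4'[of \<tau>lo \<tau>] by (intro mult_left_mono) auto
      ultimately show "\<sigma> * t2 - Er \<sigma> - (1 - \<mu>) * atil A \<tau> \<le> bb t2 - (1 - \<mu>) * atil A \<tau>lo" by simp
    qed (use l in simp)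
    finally show ?thesis by (simp add: X_def)
  qed
  have "bb t1 \<le> max (\<beta> / 2) X" by (rule bb_le[OF bound])
  then have "\<beta> \<le> max (\<beta> / 2) X" by (simp only: \<beta>_def)
  then have bX: "\<beta> \<le> X" using \<beta> by (simp add: max_def split: if_splits)
  have "X < l ^ n * bb t2"
  proof -
    have "(1 - \<mu>) * atil A \<tau>lo > 0" using mu at_pos[OF facts4 tlo] by simp
    moreover have "l ^ n > 0" using l by simp
    ultimately have "l ^ n * ((1 - \<mu>) * atil A \<tau>lo) > 0" by simp
    then show ?thesis by (simp add: X_def right_diff_distrib)
  qed
  then have "bb t1 < (t1 / t2) ^ n * bb t2" using bX by (simp add: \<beta>_def l_def)
  then show ?thesis using t by (simp add: power_divide field_simps)
qed

lemma hlim_bb: "((\<lambda>t. bb t / t ^ n) \<longlongrightarrow> 0) (at_right 0)"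
proof (rule order_tendstoI)
  fix a :: real assume "a < 0"
  show "\<forall>\<^sub>F t in at_right 0. a < bb t / t ^ n"
    unfolding eventually_at_right_field
  proof (intro exI[of _ 1] conjI allI impI)
    fix t :: real assume "0 < t" "t < 1"
    then have "bb t / t ^ n \<ge> 0" using bb_nonneg[of t] by simp
    then show "a < bb t / t ^ n" using \<open>a < 0\<close> by linarith
  qed simp
next
  fix \<epsilon> :: real assume e: "0 < \<epsilon>"
  define M where "M = max 1 (2 / \<epsilon>)"
  have M: "M \<ge> 1" "M \<ge> 2 / \<epsilon>" by (auto simp: M_def)
  obtain \<delta> where d: "\<delta> > 0" "M \<le> Fr n A \<delta>" using Fr_big[OF facts4] by blast
  define m where "m = atil A \<delta> / (pp n * \<delta>)"
  have m: "m > 0" using at_pos[OF facts4 d(1)] p_pos4' d by (simp add: m_def)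
  have key: "bb t \<le> t ^ n / M ^ (n - 1)" if tt: "0 < t" "t < m" for t
  proof (rule bb_le)
    fix \<tau> :: real assume t0: "\<tau> \<ge> 0"
    have c0: "t ^ n / M ^ (n - 1) \<ge> 0" using tt M by simp
    show "\<tau> * t - Er \<tau> \<le> t ^ n / M ^ (n - 1)"
    proof (cases "\<tau> = 0")
      case True then show ?thesis using c0 by (simp add: Er_0)
    next
      case False
      then have tp: "\<tau> > 0" using t0 by simp
      show ?thesis
      proof (cases "\<tau> \<le> \<delta>")
        case True
        have F: "Fr n A \<tau> \<ge> M" using Fr_anti[OF facts4 tp True] d by simp
        have Er: "Er \<tau> = \<tau> * (\<tau> powr pp n * Fr n A \<tau>)" by (rule Er_split[OF tp])
        show ?thesis
        proof (cases "\<tau> powr pp n * M \<ge> t")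
          case True
          have "\<tau> powr pp n * M \<le> \<tau> powr pp n * Fr n A \<tau>" using F by (intro mult_left_mono) auto
          then have "t \<le> \<tau> powr pp n * Fr n A \<tau>" using True by linarith
          then have "\<tau> * t \<le> \<tau> * (\<tau> powr pp n * Fr n A \<tau>)" using tp by (intro mult_left_mono) auto
          then have "\<tau> * t \<le> Er \<tau>" using Er by simp
          then show ?thesis using c0 by simp
        next
          case False
          then have "\<tau> powr pp n < t / M" using M by (simp add: field_simps)
          then have "(\<tau> powr pp n) ^ (n - 1) < (t / M) ^ (n - 1)"
            using n2 tp by (intro power_strict_mono) auto
          moreover have "(\<tau> powr pp n) ^ (n - 1) = \<tau>"
          proof -
            have "(\<tau> powr pp n) ^ (n - 1) = (\<tau> powr pp n) powr (real (n - 1))"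
              using tp by (simp add: powr_realpow)
            also have "\<dots> = \<tau> powr (pp n * real (n - 1))" by (simp add: powr_powr)
            also have "pp n * real (n - 1) = 1" using n2 by (simp add: pp_def of_nat_diff)
            finally show ?thesis using tp by simp
          qed
          ultimately have tl: "\<tau> < (t / M) ^ (n - 1)" by simp
          have "\<tau> * t \<le> (t / M) ^ (n - 1) * t" using tl tt by (intro mult_right_mono) auto
          also have "\<dots> = t ^ n / M ^ (n - 1)"
          proof -
            obtain k where k: "n = Suc k" using n2 by (cases n) auto
            then show ?thesis by (simp add: power_divide)
          qed
          finally show ?thesis using Er_nonneg[of \<tau>] by simp
        qed
      next
        case False
        then have tg: "\<tau> > \<delta>" by simp
        have "atil A \<delta> / \<delta> \<le> atil A \<tau> / \<tau>" using d tg by (intro at_ratio_mono[OF facts4]) auto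
        then have "\<tau> * m \<le> atil A \<tau> / pp n"
          using tp p_pos4' by (simp add: m_def field_simps)
        also have "\<dots> \<le> Er \<tau>" by (rule Er_ge_at[OF tp])
        moreover have "\<tau> * t \<le> \<tau> * m" using tt tp by (intro mult_left_mono) auto
        ultimately have "\<tau> * t \<le> Er \<tau>" by linarith
        then show ?thesis using c0 by simp
      qed
    qed
  qed
  have "\<forall>\<^sub>F t in at_right 0. bb t / t ^ n < \<epsilon>"
    unfolding eventually_at_right_field
  proof (intro exI[of _ m] conjI allI impI)
    show "(0::real) < m" by (rule m)
    fix t :: real assume tt: "0 < t" "t < m"
    have "bb t / t ^ n \<le> (t ^ n / M ^ (n - 1)) / t ^ n"
      using key[of t] tt by (intro divide_right_mono) auto
    also have "\<dots> = 1 / M ^ (n - 1)" using tt by simp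
    also have "\<dots> \<le> 1 / M"
    proof -
      have "M ^ 1 \<le> M ^ (n - 1)" using M n2 by (intro power_increasing) auto
      then show ?thesis using M by (intro divide_left_mono) auto
    qed
    also have "\<dots> < \<epsilon>"
    proof -
      have "2 / \<epsilon> \<le> M" using M by simp
      then have "2 \<le> M * \<epsilon>" using e by (simp add: field_simps)
      then show ?thesis using M e by (simp add: field_simps)
    qed
    finally show "bb t / t ^ n < \<epsilon>" .
  qed
  then show "\<forall>\<^sub>F t in at_right 0. bb t / t ^ n < \<epsilon>" .
qed

lemma case_n2:
  "\<exists>b. (\<forall>t\<ge>0. B_fun n A t = ereal (b t)) \<and> b 0 = 0 \<and> continuous_on {0<..} b
     \<and> strict_mono_on {0<..} (\<lambda>t. b t / t ^ n) \<and> ((\<lambda>t. b t / t ^ n) \<longlongrightarrow> 0) (at_right 0)"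
proof (intro exI[of _ bb] conjI allI impI)
  show "\<And>t. B_fun n A t = ereal (bb t)" by (rule B_fin)
  show "bb 0 = 0" by (rule bb0)
  show "continuous_on {0<..} bb" by (rule bb_cont)
  show "strict_mono_on {0<..} (\<lambda>t. bb t / t ^ n)"
    by (rule strict_mono_onI) (use bb_strict in auto)
  show "((\<lambda>t. bb t / t ^ n) \<longlongrightarrow> 0) (at_right 0)" by (rule hlim_bb)
qed

end


context
  fixes n :: nat and A b :: "real \<Rightarrow> real"
  assumes n1: "n \<ge> 1"
    and Bb: "\<And>t. t \<ge> 0 \<Longrightarrow> B_fun n A t = ereal (b t)"
    and b0: "b 0 = 0"
    and bcont: "continuous_on {0<..} b"
    and hsm: "strict_mono_on {0<..} (\<lambda>t. b t / t ^ n)"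
    and hlim: "((\<lambda>t. b t / t ^ n) \<longlongrightarrow> 0) (at_right 0)"
begin

lemma h_less: "0 < x \<Longrightarrow> x < y \<Longrightarrow> b x / x ^ n < b y / y ^ n"
  using hsm by (auto simp: strict_mono_on_def)

lemma h_le: "0 < x \<Longrightarrow> x \<le> y \<Longrightarrow> b x / x ^ n \<le> b y / y ^ n"
  using h_less by (cases "x = y") (auto intro: less_imp_le)

lemma h_pos: assumes "t > 0" shows "b t / t ^ n > 0"
proof -
  have "b (t/2) / (t/2) ^ n \<ge> 0"
  proof (rule tendsto_upperbound[OF hlim])
    show "\<forall>\<^sub>F x in at_right 0. b x / x ^ n \<le> b (t/2) / (t/2) ^ n"
      using assms unfolding eventually_at_right_field
      by (intro exI[of _ "t/2"]) (auto intro!: h_le)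
  qed simp
  also have "\<dots> < b t / t ^ n" using assms by (intro h_less) auto
  finally show ?thesis .
qed

lemma b_pos: "t > 0 \<Longrightarrow> b t > 0"
  using h_pos[of t] by (simp add: zero_less_divide_iff)

lemma b_eq: "t > 0 \<Longrightarrow> b t = t ^ n * (b t / t ^ n)"
  by simp

lemma b_less: assumes "0 \<le> x" "x < y" shows "b x < b y"
proof (cases "x = 0")
  case True then show ?thesis using b0 b_pos[of y] assms by simp
next
  case False
  then have x: "x > 0" using assms by auto
  have "b x = x ^ n * (b x / x ^ n)" using x by simp
  also have "\<dots> < y ^ n * (b y / y ^ n)"
    using x assms h_less[of x y] h_pos[of x] n1
    by (intro mult_strict_mono power_strict_mono) auto
  also have "\<dots> = b y" using x assms by simp
  finally show ?thesis .
qed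

lemma b_le_iff: "0 \<le> x \<Longrightarrow> 0 \<le> y \<Longrightarrow> b x \<le> b y \<longleftrightarrow> x \<le> y"
  using b_less by (metis linorder_not_le order_le_less)

lemma b_nonneg: "t \<ge> 0 \<Longrightarrow> b t \<ge> 0"
  using b_pos b0 by (cases "t = 0") (auto intro: less_imp_le)

lemma Binv_b: assumes "x \<ge> 0" shows "B_inv n A (b x) = x"
proof -
  have "{t. 0 \<le> t \<and> B_fun n A t \<le> ereal (b x)} = {0..x}"
    using assms by (auto simp: Bb b_le_iff)
  then show ?thesis using assms by (simp add: B_inv_def)
qed

lemma b_surj: assumes "u > 0" shows "\<exists>x>0. b x = u"
proof -
  have "\<forall>\<^sub>F t in at_right 0. b t / t ^ n < u"
    using hlim assms by (simp add: order_tendstoD(2))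
  then obtain e where e: "e > 0" "\<And>t. 0 < t \<Longrightarrow> t < e \<Longrightarrow> b t / t ^ n < u"
    unfolding eventually_at_right_field by auto
  define a where "a = min (e/2) 1"
  have a: "0 < a" "a < e" "a \<le> 1" using e by (auto simp: a_def)
  have "b a = a ^ n * (b a / a ^ n)" using a by simp
  also have "\<dots> \<le> 1 * (b a / a ^ n)"
    using a h_pos[of a] by (intro mult_right_mono) (auto simp: power_le_one)
  also have "\<dots> < u" using e(2)[OF a(1,2)] by simp
  finally have ba: "b a < u" .
  define K where "K = max 1 (u / (b 1 / 1 ^ n)) + 1"
  have h1: "b 1 / 1 ^ n > 0" using h_pos[of 1] by simp
  have K: "K > 1" "K \<ge> u / (b 1) + 1" using h1 by (auto simp: K_def)
  have "u < K * b 1"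
  proof -
    have "u / b 1 < K" using K by linarith
    then show ?thesis using h1 by (simp add: divide_less_eq mult.commute)
  qed
  also have "\<dots> \<le> K ^ n * (b K / K ^ n)"
  proof (intro mult_mono)
    show "K \<le> K ^ n" using K n1 by (metis less_imp_le one_le_power power_increasing power_one_right)
    show "b 1 \<le> b K / K ^ n" using h_le[of 1 K] K by simp
  qed (use K h_pos[of K] b_pos[of 1] in auto)
  also have "\<dots> = b K" using K by simp
  finally have bK: "u < b K" .
  have "a \<le> K" using a K by auto
  have "continuous_on {a..K} b" by (rule continuous_on_subset[OF bcont]) (use a in auto)
  from IVT'[of b a u K, OF less_imp_le[OF ba] less_imp_le[OF bK] \<open>a \<le> K\<close> this]
  obtain x where "a \<le> x" "b x = u" by auto
  then show ?thesis using a by (intro exI[of _ x]) auto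
qed

context
  fixes \<phi> :: "real \<Rightarrow> real"
  assumes gauge: "gauge_function n \<phi>"
begin

lemma phi0: "\<phi> 0 = 0" and phi_pos: "t > 0 \<Longrightarrow> \<phi> t > 0"
  and phi_mono: "0 \<le> x \<Longrightarrow> x \<le> y \<Longrightarrow> \<phi> x \<le> \<phi> y"
  and phi_cont: "continuous_on {0..} \<phi>"
  and phi_anti: "0 < x \<Longrightarrow> x \<le> y \<Longrightarrow> \<phi> y / y ^ n \<le> \<phi> x / x ^ n"
  using gauge unfolding gauge_function_def monotone_on_def by auto

definition X :: "real \<Rightarrow> real \<Rightarrow> real" where
  "X r s = B_inv n A (r * \<phi> s / s ^ n)"

lemma X_prop: assumes "r > 0" "s > 0" shows "X r s > 0" "b (X r s) = r * \<phi> s / s ^ n"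
proof -
  have "r * \<phi> s / s ^ n > 0" using assms phi_pos[of s] by simp
  then obtain x where x: "x > 0" "b x = r * \<phi> s / s ^ n" using b_surj by blast
  then have "X r s = x" unfolding X_def using Binv_b[of x] by simp
  then show "X r s > 0" "b (X r s) = r * \<phi> s / s ^ n" using x by auto
qed

lemma J_eq: "s \<noteq> 0 \<Longrightarrow> J_fun n A \<phi> r s = s * X r s"
  by (simp add: J_fun_def X_def)

lemma X_eqI: assumes "r > 0" "s > 0" "x \<ge> 0" "b x = r * \<phi> s / s ^ n" shows "X r s = x"
  unfolding X_def using Binv_b[of x] assms by simp

lemma X_mono_r: assumes "0 < r1" "r1 \<le> r2" "s > 0" shows "X r1 s \<le> X r2 s"
proof -
  have "b (X r1 s) \<le> b (X r2 s)"
    using X_prop[of r1 s] X_prop[of r2 s] assms phi_pos[of s]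
    by (simp add: divide_right_mono mult_right_mono)
  moreover have "X r1 s \<ge> 0" "X r2 s \<ge> 0" using X_prop[of r1 s] X_prop[of r2 s] assms by auto
  ultimately show ?thesis using b_le_iff by blast
qed

lemma J0: "J_fun n A \<phi> r 0 = 0" by (simp add: J_fun_def)

lemma J_mono_r: assumes "0 < r1" "r1 \<le> r2" "s \<ge> 0" shows "J_fun n A \<phi> r1 s \<le> J_fun n A \<phi> r2 s"
  using assms X_mono_r[of r1 r2 s] by (cases "s = 0") (simp add: J0, simp add: J_eq mult_left_mono)

lemma Jn: assumes "r > 0" "s > 0"
  shows "(J_fun n A \<phi> r s) ^ n = r * \<phi> s / (b (X r s) / X r s ^ n)"
proof -
  have x: "X r s > 0" "b (X r s) = r * \<phi> s / s ^ n" using X_prop[OF assms] by auto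
  have "(J_fun n A \<phi> r s) ^ n = s ^ n * X r s ^ n" using assms by (simp add: J_eq power_mult_distrib)
  also have "\<dots> = r * \<phi> s / (b (X r s) / X r s ^ n)"
    using x assms phi_pos[of s] b_pos[of "X r s"] by (simp add: field_simps)
  finally show ?thesis .
qed

lemma J_strict: assumes "r > 0" shows "strict_mono_on {0..} (J_fun n A \<phi> r)"
proof (rule strict_mono_onI)
  fix s1 s2 :: real assume s: "s1 \<in> {0..}" "s2 \<in> {0..}" "s1 < s2"
  show "J_fun n A \<phi> r s1 < J_fun n A \<phi> r s2"
  proof (cases "s1 = 0")
    case True
    then show ?thesis using s X_prop[of r s2] assms by (simp add: J_eq J0)
  next
    case False
    then have s1: "s1 > 0" using s by auto
    have s2: "s2 > 0" using s1 s by auto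
    define x1 x2 where "x1 = X r s1" and "x2 = X r s2"
    have x1: "x1 > 0" "b x1 = r * \<phi> s1 / s1 ^ n" using X_prop[OF assms s1] by (auto simp: x1_def)
    have x2: "x2 > 0" "b x2 = r * \<phi> s2 / s2 ^ n" using X_prop[OF assms s2] by (auto simp: x2_def)
    have u: "r * \<phi> s2 / s2 ^ n \<le> r * \<phi> s1 / s1 ^ n"
      using phi_anti[of s1 s2] s1 s assms by (simp add: mult_left_mono times_divide_eq_right[symmetric] del: times_divide_eq_right)
    then have x21: "x2 \<le> x1" using x1 x2 b_le_iff[of x2 x1] by auto
    have h21: "b x2 / x2 ^ n \<le> b x1 / x1 ^ n" by (rule h_le[OF x2(1) x21])
    have hp: "b x2 / x2 ^ n > 0" by (rule h_pos[OF x2(1)])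
    have "(J_fun n A \<phi> r s1) ^ n < (J_fun n A \<phi> r s2) ^ n"
    proof (cases "\<phi> s1 < \<phi> s2")
      case True
      have "(J_fun n A \<phi> r s1) ^ n = r * \<phi> s1 / (b x1 / x1 ^ n)" using Jn[OF assms s1] x1_def by simp
      also have "\<dots> \<le> r * \<phi> s1 / (b x2 / x2 ^ n)"
      proof (rule divide_left_mono[OF h21])
        show "0 \<le> r * \<phi> s1" using assms phi_pos[of s1] s1 by simp
        show "0 < b x1 / x1 ^ n * (b x2 / x2 ^ n)" using hp h21 by (intro mult_pos_pos) auto
      qed
      also have "\<dots> < r * \<phi> s2 / (b x2 / x2 ^ n)"
        using True hp assms by (intro divide_strict_right_mono) auto
      also have "\<dots> = (J_fun n A \<phi> r s2) ^ n" using Jn[OF assms s2] x2_def by simp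
      finally show ?thesis .
    next
      case False
      then have eq: "\<phi> s1 = \<phi> s2" using phi_mono[of s1 s2] s1 s by auto
      have "s1 ^ n < s2 ^ n" using s1 s n1 by (intro power_strict_mono) auto
      then have "r * \<phi> s1 / s2 ^ n < r * \<phi> s1 / s1 ^ n"
        using s1 s assms phi_pos[of s1] by (intro divide_strict_left_mono) auto
      then have "r * \<phi> s2 / s2 ^ n < r * \<phi> s1 / s1 ^ n" using eq by simp
      then have "x2 < x1" using x1 x2 b_le_iff by (metis less_imp_le not_le)
      then have h21': "b x2 / x2 ^ n < b x1 / x1 ^ n" by (rule h_less[OF x2(1)])
      have "(J_fun n A \<phi> r s1) ^ n = r * \<phi> s1 / (b x1 / x1 ^ n)" using Jn[OF assms s1] x1_def by simp
      also have "\<dots> < r * \<phi> s1 / (b x2 / x2 ^ n)"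
      proof (rule divide_strict_left_mono[OF h21'])
        show "0 < r * \<phi> s1" using assms phi_pos[of s1] s1 by simp
        show "0 < b x1 / x1 ^ n * (b x2 / x2 ^ n)" using hp h21' by (intro mult_pos_pos) auto
      qed
      also have "\<dots> = (J_fun n A \<phi> r s2) ^ n" using Jn[OF assms s2] x2_def eq by simp
      finally show ?thesis .
    qed
    moreover have "J_fun n A \<phi> r s2 \<ge> 0" using s2 X_prop[OF assms s2] by (simp add: J_eq)
    ultimately show ?thesis using power_less_imp_less_base by blast
  qed
qed

lemma sb_eq: assumes "s > 0" "y > 0" shows "s ^ n * b (y / s) = y ^ n * (b (y/s) / (y/s) ^ n)"
  using assms by (simp add: power_divide)

lemma J_surj: assumes r: "r > 0" and y: "y > 0" shows "\<exists>s>0. J_fun n A \<phi> r s = y"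
proof -
  define c where "c = y ^ n * (b y / y ^ n)"
  have c: "c > 0" using b_pos[OF y] y by (simp add: c_def)
  have "(\<phi> \<longlongrightarrow> \<phi> 0) (at 0 within {0..})"
    using phi_cont by (simp add: continuous_on_def)
  then have "(\<phi> \<longlongrightarrow> 0) (at_right 0)" using phi0
    by (metis atLeast_iff greaterThan_iff less_imp_le subsetI tendsto_within_subset)
  then have "\<forall>\<^sub>F s in at_right 0. \<phi> s < c / r" using c r by (simp add: order_tendstoD(2))
  then obtain e where e: "e > 0" "\<And>s. 0 < s \<Longrightarrow> s < e \<Longrightarrow> \<phi> s < c / r"
    unfolding eventually_at_right_field by auto
  define sa where "sa = min (e/2) 1"
  have sa: "0 < sa" "sa < e" "sa \<le> 1" using e by (auto simp: sa_def)
  have ka: "r * \<phi> sa - sa ^ n * b (y / sa) \<le> 0"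
  proof -
    have "r * \<phi> sa < c" using e(2)[OF sa(1,2)] r by (simp add: field_simps)
    moreover have "c \<le> sa ^ n * b (y / sa)"
      unfolding sb_eq[OF sa(1) y] c_def
      using sa y by (intro mult_left_mono h_le) (auto simp: field_simps)
    ultimately show ?thesis by simp
  qed
  have "\<forall>\<^sub>F x in at_right 0. b x / x ^ n < r * \<phi> 1 / y ^ n"
    using hlim r y phi_pos[of 1] by (intro order_tendstoD(2)) auto
  then obtain d where d: "d > 0" "\<And>x. 0 < x \<Longrightarrow> x < d \<Longrightarrow> b x / x ^ n < r * \<phi> 1 / y ^ n"
    unfolding eventually_at_right_field by auto
  define sb where "sb = max 2 (2 * y / d)"
  have sb: "sb \<ge> 2" "sb \<ge> 2 * y / d" by (auto simp: sb_def)
  have ysb: "y / sb < d"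
  proof -
    from sb(2) d(1) have "2*y \<le> sb * d" by (simp add: pos_divide_le_eq)
    then have "y < d * sb" using y by (simp add: mult.commute)
    then show ?thesis using sb by (simp add: divide_less_eq mult.commute)
  qed
  have kb: "r * \<phi> sb - sb ^ n * b (y / sb) \<ge> 0"
  proof -
    have "sb ^ n * b (y / sb) = y ^ n * (b (y/sb) / (y/sb) ^ n)" using sb y by (intro sb_eq) auto
    also have "\<dots> \<le> y ^ n * (r * \<phi> 1 / y ^ n)"
      using d(2)[of "y/sb"] ysb sb y by (intro mult_left_mono less_imp_le) auto
    also have "\<dots> = r * \<phi> 1" using y by simp
    also have "\<dots> \<le> r * \<phi> sb" using phi_mono[of 1 sb] sb r by (intro mult_left_mono) auto
    finally show ?thesis by simp
  qed
  have "sa \<le> sb" using sa sb by auto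
  have cont: "continuous_on {sa..sb} (\<lambda>s. r * \<phi> s - s ^ n * b (y / s))"
  proof (intro continuous_intros)
    show "continuous_on {sa..sb} \<phi>" by (rule continuous_on_subset[OF phi_cont]) (use sa in auto)
    show "continuous_on {sa..sb} (\<lambda>s. b (y / s))"
    proof (rule continuous_on_compose2[OF bcont])
      show "continuous_on {sa..sb} (\<lambda>s. y / s)" using sa by (intro continuous_intros) auto
      show "(\<lambda>s. y / s) ` {sa..sb} \<subseteq> {0<..}" using sa y by auto
    qed
  qed
  from IVT'[of "\<lambda>s. r * \<phi> s - s ^ n * b (y / s)" sa 0 sb, OF ka kb \<open>sa \<le> sb\<close> cont]
  obtain s where s: "sa \<le> s" "r * \<phi> s - s ^ n * b (y / s) = 0" by auto
  have s0: "s > 0" using s sa by auto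
  have "b (y / s) = r * \<phi> s / s ^ n" using s s0 by (simp add: field_simps)
  then have "X r s = y / s" using X_eqI[OF r s0, of "y/s"] y s0 by simp
  then have "J_fun n A \<phi> r s = y" using s0 by (simp add: J_eq)
  then show ?thesis using s0 by blast
qed

lemma J_bij: assumes "r > 0" shows "bij_betw (J_fun n A \<phi> r) {0..} {0..}"
proof -
  have inj: "inj_on (J_fun n A \<phi> r) {0..}" using J_strict[OF assms] by (rule strict_mono_on_imp_inj_on)
  have "J_fun n A \<phi> r ` {0..} = {0..}"
  proof
    show "J_fun n A \<phi> r ` {0..} \<subseteq> {0..}"
    proof
      fix y assume "y \<in> J_fun n A \<phi> r ` {0..}"
      then obtain s where s: "s \<ge> 0" "y = J_fun n A \<phi> r s" by auto
      then show "y \<in> {0..}" using X_prop[OF assms, of s] by (cases "s = 0") (auto simp: J0 J_eq)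
    qed
    show "{0..} \<subseteq> J_fun n A \<phi> r ` {0..}"
    proof
      fix y :: real assume "y \<in> {0..}"
      then show "y \<in> J_fun n A \<phi> r ` {0..}"
      proof (cases "y = 0")
        case True then show ?thesis using J0[of r] by (metis atLeast_iff image_eqI order_refl)
      next
        case False
        then have "y > 0" using \<open>y \<in> {0..}\<close> by simp
        then obtain s where "s > 0" "J_fun n A \<phi> r s = y" using J_surj[OF assms] by blast
        then show ?thesis by (metis atLeast_iff image_eqI less_imp_le)
      qed
    qed
  qed
  then show ?thesis using inj by (simp add: bij_betw_def)
qed

lemma Jinv: assumes "r > 0" "y \<ge> 0"
  shows "J_inv n A \<phi> r y \<ge> 0" "J_fun n A \<phi> r (J_inv n A \<phi> r y) = y"
proof -
  have b: "bij_betw (J_fun n A \<phi> r) {0..} {0..}" by (rule J_bij[OF assms(1)])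
  have inj: "inj_on (J_fun n A \<phi> r) {0..}" and im: "y \<in> J_fun n A \<phi> r ` {0..}"
    using b assms by (auto simp: bij_betw_def)
  show "J_inv n A \<phi> r y \<ge> 0" using the_inv_into_into[OF inj im, of "{0..}"] by (simp add: J_inv_def)
  show "J_fun n A \<phi> r (J_inv n A \<phi> r y) = y" using f_the_inv_into_f[OF inj im] by (simp add: J_inv_def)
qed

lemma Jinv_anti: assumes "s > 0" shows "antimono_on {0<..} (\<lambda>r. J_inv n A \<phi> r s)"
  unfolding monotone_on_def
proof (intro ballI impI)
  fix r1 r2 :: real assume r: "r1 \<in> {0<..}" "r2 \<in> {0<..}" "r1 \<le> r2"
  have r1: "r1 > 0" and r2: "r2 > 0" using r by auto
  obtain s1 where s1: "s1 = J_inv n A \<phi> r1 s" by blast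
  obtain s2 where s2: "s2 = J_inv n A \<phi> r2 s" by blast
  have a1: "s1 \<ge> 0" "J_fun n A \<phi> r1 s1 = s" unfolding s1 using Jinv[OF r1] assms by auto
  have a2: "s2 \<ge> 0" "J_fun n A \<phi> r2 s2 = s" unfolding s2 using Jinv[OF r2] assms by auto
  have "s2 \<le> s1"
  proof (rule ccontr)
    assume "\<not> s2 \<le> s1"
    then have lt: "s1 < s2" by simp
    have sm: "strict_mono_on {0..} (J_fun n A \<phi> r2)" by (rule J_strict[OF r2])
    have c1: "J_fun n A \<phi> r2 s1 < J_fun n A \<phi> r2 s2"
      by (rule strict_mono_onD[OF sm _ _ lt]) (use a1 a2 in auto)
    have c2: "J_fun n A \<phi> r1 s1 \<le> J_fun n A \<phi> r2 s1" by (rule J_mono_r[OF r1 r(3) a1(1)])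
    from c1 c2 have "J_fun n A \<phi> r1 s1 < J_fun n A \<phi> r2 s2" by linarith
    then show False unfolding a1(2) a2(2) by simp
  qed
  then show "J_inv n A \<phi> r2 s \<le> J_inv n A \<phi> r1 s" unfolding s1 s2 .
qed

lemma main_ineq: assumes s: "s > 0" and t: "t > 0" and r: "r > 0"
  shows "ereal (\<phi> (J_inv n A \<phi> r (s * t))) \<le> ereal (\<phi> t) + ereal (t ^ n / r) * B_fun n A s"
proof -
  define \<sigma> where "\<sigma> = J_inv n A \<phi> r (s * t)"
  have sg: "\<sigma> \<ge> 0" "J_fun n A \<phi> r \<sigma> = s * t" using Jinv[of r "s*t"] r s t by (auto simp: \<sigma>_def)
  have Bs: "B_fun n A s = ereal (b s)" using Bb s by simp
  have "\<phi> \<sigma> \<le> \<phi> t + t ^ n / r * b s"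
  proof (cases "\<sigma> \<le> t")
    case True
    then have "\<phi> \<sigma> \<le> \<phi> t" using phi_mono sg by auto
    moreover have "t ^ n / r * b s \<ge> 0" using b_nonneg[of s] s t r by simp
    ultimately show ?thesis by simp
  next
    case False
    then have sgt: "\<sigma> > t" by simp
    then have sg0: "\<sigma> > 0" using t by simp
    define x where "x = X r \<sigma>"
    have x: "x > 0" "b x = r * \<phi> \<sigma> / \<sigma> ^ n" using X_prop[OF r sg0] by (auto simp: x_def)
    have sx: "\<sigma> * x = s * t" using sg sg0 by (simp add: J_eq x_def)
    have xs: "x < s"
    proof -
      have "\<sigma> * x < \<sigma> * s" using sx sgt s by simp
      then show ?thesis using sg0 by simp
    qed
    have "\<phi> \<sigma> = \<sigma> ^ n * b x / r" using x sg0 r by (simp add: field_simps)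
    also have "\<dots> = (s * t) ^ n * (b x / x ^ n) / r" using x sx[symmetric] by (simp add: power_mult_distrib)
    also have "\<dots> \<le> (s * t) ^ n * (b s / s ^ n) / r"
      using h_le[OF x(1) less_imp_le[OF xs]] s t r by (intro divide_right_mono mult_left_mono) auto
    also have "\<dots> = t ^ n / r * b s" using s by (simp add: power_mult_distrib field_simps)
    finally have "\<phi> \<sigma> \<le> t ^ n / r * b s" .
    moreover have "\<phi> t \<ge> 0" using phi_pos[OF t] by simp
    ultimately show ?thesis by linarith
  qed
  then have "ereal (\<phi> \<sigma>) \<le> ereal (\<phi> t + t ^ n / r * b s)" by (simp only: ereal_less_eq)
  also have "\<dots> = ereal (\<phi> t) + ereal (t ^ n / r) * ereal (b s)" by simp
  finally have "ereal (\<phi> \<sigma>) \<le> ereal (\<phi> t) + ereal (t ^ n / r) * ereal (b s)" .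
  then show ?thesis by (simp only: Bs \<sigma>_def)
qed

lemma all_claims:
  shows "(\<forall>r>0. strict_mono_on {0..} (J_fun n A \<phi> r) \<and> bij_betw (J_fun n A \<phi> r) {0..} {0..})
     \<and> (\<forall>s>0. antimono_on {0<..} (\<lambda>r. J_inv n A \<phi> r s))
     \<and> (\<forall>s>0. \<forall>t>0. \<forall>r>0. ereal (\<phi> (J_inv n A \<phi> r (s * t)))
            \<le> ereal (\<phi> t) + ereal (t ^ n / r) * B_fun n A s)"
proof (intro conjI allI impI)
  show "\<And>r. 0 < r \<Longrightarrow> strict_mono_on {0..} (J_fun n A \<phi> r)" by (rule J_strict)
  show "\<And>r. 0 < r \<Longrightarrow> bij_betw (J_fun n A \<phi> r) {0..} {0..}" by (rule J_bij)
  show "\<And>s. 0 < s \<Longrightarrow> antimono_on {0<..} (\<lambda>r. J_inv n A \<phi> r s)" by (rule Jinv_anti)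
  show "\<And>s t r. 0 < s \<Longrightarrow> 0 < t \<Longrightarrow> 0 < r \<Longrightarrow> ereal (\<phi> (J_inv n A \<phi> r (s * t)))
            \<le> ereal (\<phi> t) + ereal (t ^ n / r) * B_fun n A s" by (rule main_ineq)
qed

end
end

theorem lemma4p7:
  fixes n :: nat and A \<phi> :: "real \<Rightarrow> real"
  assumes "n \<ge> 1"
    and "young_function A" and "cond_C1 n A" and "cond_C2 A" and "cond_C3 n A"
    and "gauge_function n \<phi>"
  shows "(\<forall>r>0. strict_mono_on {0..} (J_fun n A \<phi> r) \<and> bij_betw (J_fun n A \<phi> r) {0..} {0..})
     \<and> (\<forall>s>0. antimono_on {0<..} (\<lambda>r. J_inv n A \<phi> r s))
     \<and> (\<forall>s>0. \<forall>t>0. \<forall>r>0. ereal (\<phi> (J_inv n A \<phi> r (s * t)))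
            \<le> ereal (\<phi> t) + ereal (t ^ n / r) * B_fun n A s)"
proof -
  have "\<exists>b. (\<forall>t\<ge>0. B_fun n A t = ereal (b t)) \<and> b 0 = 0 \<and> continuous_on {0<..} b
     \<and> strict_mono_on {0<..} (\<lambda>t. b t / t ^ n) \<and> ((\<lambda>t. b t / t ^ n) \<longlongrightarrow> 0) (at_right 0)"
  proof (cases "n = 1")
    case True
    then show ?thesis using case_n1[OF assms(2)] assms(5,4) by simp
  next
    case False
    then have "n \<ge> 2" using assms(1) by simp
    then show ?thesis by (rule case_n2[OF _ assms(2-5)])
  qed
  then obtain b where b: "\<forall>t\<ge>0. B_fun n A t = ereal (b t)" "b 0 = 0" "continuous_on {0<..} b"
     "strict_mono_on {0<..} (\<lambda>t. b t / t ^ n)" "((\<lambda>t. b t / t ^ n) \<longlongrightarrow> 0) (at_right 0)"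
    by blast
  show ?thesis
    by (rule all_claims[OF assms(1) _ b(2-5) assms(6)]) (use b(1) in simp)
qed

end
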